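(* Let $f,g$ satisfy the standing assumptions below and let $\beta>0$. For any $x\in\mathbb{R}^n$, $y\in\mathbb{R}^p$, $$\partial h(x,y)\subseteq\Big\{\big(d_x+J_{A,x}(x,y)d_y+\beta\nabla^2_{xy}g(x,y)\nabla_yg(x,y),\ J_{A,y}(x,y)d_y+\beta\nabla^2_{yy}g(x,y)\nabla_yg(x,y)\big):(d_x,d_y)\in\partial f(x,\mathcal{A}(x,y))\Big\},$$ with equality when $f$ is Clarke regular.
   Context: Standing assumptions. (A1) Constants $M_f,\mu,L_g,Q_g>0$ exist such that: $f:\mathbb{R}^n\times\mathbb{R}^p\to\mathbb{R}$ is $M_f$-Lipschitz; $g$ is twice differentiable with $\nabla^2_{yy}g\succeq\mu I_p$; $\nabla g$ is $L_g$-Lipschitz; $\nabla^2_{yy}g,\nabla^2_{xy}g$ are $Q_g$-Lipschitz; $\nabla^2_{yy}g$ is continuously differentiable ($\nabla^2_{xy}g\in\mathbb{R}^{n\times p}$ has entries $\partial^2g/\partial x_i\partial y_j$). (A2) $f$ is a potential function of a conservative field $\mathcal{D}_f$ with compact convex values of norm at most $M_f$. $\partial$ denotes the Clarke subdifferential. Notation: $H=\nabla^2_{yy}g(x,y)$; $\mathcal{A}(x,y):=y-H^{-1}\nabla_yg(x,y)$; $h(x,y):=f(x,\mathcal{A}(x,y))+\frac\beta2\|\nabla_yg(x,y)\|^2$; $\nabla^3_{xyy}g(x,y)[d]:=\lim_{t\to0}\frac1t(\nabla^2_{xy}g(x,y+td)-\nabla^2_{xy}g(x,y))$, $\nabla^3_{yyy}g(x,y)[d]:=\lim_{t\to0}\frac1t(\nabla^2_{yy}g(x,y+td)-\nabla^2_{yy}g(x,y))$;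 $J_{A,x}(x,y):=-\nabla^2_{xy}g(x,y)H^{-1}+\nabla^3_{xyy}g(x,y)[H^{-1}\nabla_yg(x,y)]H^{-1}$; $J_{A,y}(x,y):=\nabla^3_{yyy}g(x,y)[H^{-1}\nabla_yg(x,y)]H^{-1}$. *)

theory Defs
  imports "HOL-Analysis.Analysis"
begin

definition clarke_dd :: "('a::real_normed_vector \<Rightarrow> real) \<Rightarrow> 'a \<Rightarrow> 'a \<Rightarrow> ereal" where
  "clarke_dd F z d =
     Limsup (nhds z \<times>\<^sub>F at_right (0::real)) (\<lambda>(w, t). ereal ((F (w + t *\<^sub>R d) - F w) / t))"

definition clarke_subdiff :: "('a::real_inner \<Rightarrow> real) \<Rightarrow> 'a \<Rightarrow> 'a set" where
  "clarke_subdiff F z = {v. \<forall>d. ereal (v \<bullet> d) \<le> clarke_dd F z d}"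

definition clarke_regular_at :: "('a::real_normed_vector \<Rightarrow> real) \<Rightarrow> 'a \<Rightarrow> bool" where
  "clarke_regular_at F z \<longleftrightarrow>
     (\<forall>d. ((\<lambda>t. ereal ((F (z + t *\<^sub>R d) - F z) / t)) \<longlongrightarrow> clarke_dd F z d) (at_right 0))"

definition clarke_regular :: "('a::real_normed_vector \<Rightarrow> real) \<Rightarrow> bool" where
  "clarke_regular F \<longleftrightarrow> (\<forall>z. clarke_regular_at F z)"

definition abs_cont_curve :: "(real \<Rightarrow> 'a::metric_space) \<Rightarrow> bool" where
  "abs_cont_curve \<gamma> \<longleftrightarrow>
    (\<forall>e>0. \<exists>\<delta>>0. \<forall>(k::nat) (a::nat \<Rightarrow> real) b.
       (\<forall>i<k. 0 \<le> a i \<and> a i \<le> b i \<and> b i \<le> 1) \<and>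
       (\<forall>i<k. \<forall>j<k. i \<noteq> j \<longrightarrow> b i \<le> a j \<or> b j \<le> a i) \<and>
       (\<Sum>i<k. b i - a i) < \<delta>
       \<longrightarrow> (\<Sum>i<k. dist (\<gamma> (b i)) (\<gamma> (a i))) < e)"

definition conservative_field :: "('a::euclidean_space \<Rightarrow> 'a set) \<Rightarrow> bool" where
  "conservative_field D \<longleftrightarrow>
     closed {(z, v). v \<in> D z} \<and> (\<forall>z. D z \<noteq> {} \<and> compact (D z)) \<and>
     (\<forall>\<gamma>. abs_cont_curve \<gamma> \<and> \<gamma> 0 = \<gamma> 1 \<longrightarrow>
        (LINT t:{0..1}|lborel. Sup ((\<lambda>v. vector_derivative \<gamma> (at t) \<bullet> v) ` D (\<gamma> t))) = 0)"

definition potential_of :: "('a::euclidean_space \<Rightarrow> real) \<Rightarrow> ('a \<Rightarrow> 'a set) \<Rightarrow> bool" where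
  "potential_of F D \<longleftrightarrow> conservative_field D \<and>
     (\<forall>\<gamma>. abs_cont_curve \<gamma> \<longrightarrow>
        F (\<gamma> 1) - F (\<gamma> 0) =
        (LINT t:{0..1}|lborel. Sup ((\<lambda>v. vector_derivative \<gamma> (at t) \<bullet> v) ` D (\<gamma> t))))"

definition grad_x :: "((real^'n) \<times> (real^'p) \<Rightarrow> real) \<Rightarrow> (real^'n) \<times> (real^'p) \<Rightarrow> real^'n" where
  "grad_x g z = (\<chi> i. frechet_derivative g (at z) (axis i 1, 0))"

definition grad_y :: "((real^'n) \<times> (real^'p) \<Rightarrow> real) \<Rightarrow> (real^'n) \<times> (real^'p) \<Rightarrow> real^'p" where
  "grad_y g z = (\<chi> j. frechet_derivative g (at z) (0, axis j 1))"

text \<open>Hessian block in y: (i,j) entry is d^2 g / dy_i dy_j.\<close>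
definition hess_yy :: "((real^'n) \<times> (real^'p) \<Rightarrow> real) \<Rightarrow> (real^'n) \<times> (real^'p) \<Rightarrow> real^'p^'p" where
  "hess_yy g z = (\<chi> i j. frechet_derivative (\<lambda>w. grad_y g w $ j) (at z) (0, axis i 1))"

text \<open>Mixed block, an n x p matrix: (i,j) entry is d^2 g / dx_i dy_j.\<close>
definition hess_xy :: "((real^'n) \<times> (real^'p) \<Rightarrow> real) \<Rightarrow> (real^'n) \<times> (real^'p) \<Rightarrow> real^'p^'n" where
  "hess_xy g z = (\<chi> i j. frechet_derivative (\<lambda>w. grad_y g w $ j) (at z) (axis i 1, 0))"

definition ddir_y :: "((real^'n) \<times> (real^'p) \<Rightarrow> 'm::real_normed_vector) \<Rightarrow> (real^'n) \<times> (real^'p) \<Rightarrow> real^'p \<Rightarrow> 'm" where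
  "ddir_y M z d = Lim (at (0::real)) (\<lambda>t. (1 / t) *\<^sub>R (M (fst z, snd z + t *\<^sub>R d) - M z))"

definition Amap :: "((real^'n) \<times> (real^'p) \<Rightarrow> real) \<Rightarrow> (real^'n) \<times> (real^'p) \<Rightarrow> real^'p" where
  "Amap g z = snd z - matrix_inv (hess_yy g z) *v grad_y g z"

definition hfun :: "((real^'n) \<times> (real^'p) \<Rightarrow> real) \<Rightarrow> ((real^'n) \<times> (real^'p) \<Rightarrow> real) \<Rightarrow> real
                     \<Rightarrow> (real^'n) \<times> (real^'p) \<Rightarrow> real" where
  "hfun f g \<beta> z = f (fst z, Amap g z) + \<beta> / 2 * (norm (grad_y g z))\<^sup>2"

definition JAx :: "((real^'n) \<times> (real^'p) \<Rightarrow> real) \<Rightarrow> (real^'n) \<times> (real^'p) \<Rightarrow> real^'p^'n" where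
  "JAx g z = - (hess_xy g z ** matrix_inv (hess_yy g z))
             + ddir_y (hess_xy g) z (matrix_inv (hess_yy g z) *v grad_y g z) ** matrix_inv (hess_yy g z)"

definition JAy :: "((real^'n) \<times> (real^'p) \<Rightarrow> real) \<Rightarrow> (real^'n) \<times> (real^'p) \<Rightarrow> real^'p^'p" where
  "JAy g z = ddir_y (hess_yy g) z (matrix_inv (hess_yy g z) *v grad_y g z) ** matrix_inv (hess_yy g z)"

end

theory Submission
  imports Defs
begin

abbreviation PF :: "'a::topological_space \<Rightarrow> ('a \<times> real) filter" where
  "PF z \<equiv> nhds z \<times>\<^sub>F at_right (0::real)"

definition cq :: "('a::real_normed_vector \<Rightarrow> real) \<Rightarrow> 'a \<Rightarrow> 'a \<times> real \<Rightarrow> real" where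
  "cq F d y = (F (fst y + snd y *\<^sub>R d) - F (fst y)) / snd y"

lemma clarke_dd_cq: "clarke_dd F z d = Limsup (PF z) (\<lambda>y. ereal (cq F d y))"
  unfolding clarke_dd_def cq_def by (simp add: split_def)

lemma PF_nonbot: "PF z \<noteq> bot"
  by (simp add: prod_filter_eq_bot trivial_limit_at_right_real)

lemma PF_snd_pos: "eventually (\<lambda>y. snd y > 0) (PF z)"
  using eventually_prodI[of "\<lambda>_. True" "nhds z" "\<lambda>t. t > (0::real)" "at_right 0"]
  by (simp add: eventually_at_right_less)

lemma PF_fst: "(fst \<longlongrightarrow> z) (PF z)"
  by (rule filterlim_fst)

lemma PF_snd: "filterlim snd (at_right 0) (PF z)"
  by (rule filterlim_snd)

lemma PF_snd0: "(snd \<longlongrightarrow> 0) (PF z)"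
  using PF_snd filterlim_at by blast

lemma LS_comp:
  fixes a :: "'x \<Rightarrow> real" and b :: "'y \<Rightarrow> real"
  assumes k: "filterlim k G' G"
    and ev: "\<And>e. e > 0 \<Longrightarrow> eventually (\<lambda>x. a x \<le> b (k x) + c + e) G"
  shows "Limsup G (\<lambda>x. ereal (a x)) \<le> Limsup G' (\<lambda>y. ereal (b y)) + ereal c"
proof -
  define L where "L = Limsup G' (\<lambda>y. ereal (b y))"
  have LL: "\<forall>y>L. eventually (\<lambda>x. y > ereal (b x)) G'"
    using Limsup_le_iff[where C=L and F=G' and X="\<lambda>y. ereal (b y)"] L_def by auto
  show ?thesis unfolding L_def[symmetric]
  proof (subst Limsup_le_iff, intro allI impI)
    fix Y assume Y: "Y > L + ereal c"
    show "eventually (\<lambda>x. Y > ereal (a x)) G"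
    proof (cases Y)
      case PInf then show ?thesis by simp
    next
      case MInf then show ?thesis using Y by simp
    next
      case (real r)
      have "L < ereal (r - c)" using Y real by (cases L) auto
      then obtain s where s1: "L < ereal s" and s2: "ereal s < ereal (r - c)"
        using ereal_dense2 by blast
      have "eventually (\<lambda>x. ereal s > ereal (b x)) G'" using LL s1 by blast
      then have e1: "eventually (\<lambda>x. s > b (k x)) G"
        using k unfolding filterlim_iff by auto
      have e2: "eventually (\<lambda>x. a x \<le> b (k x) + c + (r - c - s)) G"
        by (rule ev) (use s2 in simp)
      show ?thesis
        using eventually_conj[OF e1 e2] real by (auto elim!: eventually_mono)
    qed
  qed
qed

lemma LS_add:
  fixes a :: "'x \<Rightarrow> real" and b1 :: "'y \<Rightarrow> real" and b2 :: "'z \<Rightarrow> real"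
  assumes k1: "filterlim k1 G1 G" and k2: "filterlim k2 G2 G"
    and ev: "eventually (\<lambda>x. a x \<le> b1 (k1 x) + b2 (k2 x)) G"
    and L1: "Limsup G1 (\<lambda>y. ereal (b1 y)) = ereal l1"
    and L2: "Limsup G2 (\<lambda>y. ereal (b2 y)) = ereal l2"
  shows "Limsup G (\<lambda>x. ereal (a x)) \<le> ereal (l1 + l2)"
proof (subst Limsup_le_iff, intro allI impI)
  fix Y assume Y: "Y > ereal (l1 + l2)"
  show "eventually (\<lambda>x. Y > ereal (a x)) G"
  proof (cases Y)
    case PInf then show ?thesis by simp
  next
    case MInf then show ?thesis using Y by simp
  next
    case (real r)
    define e where "e = (r - l1 - l2) / 2"
    have e: "e > 0" using Y real e_def by simp
    have "\<forall>y>ereal l1. eventually (\<lambda>x. y > ereal (b1 x)) G1"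
      using Limsup_le_iff[where C="ereal l1" and F=G1 and X="\<lambda>y. ereal (b1 y)"] L1 by auto
    from this[rule_format, of "ereal (l1 + e)"] e
    have "eventually (\<lambda>x. ereal (l1 + e) > ereal (b1 x)) G1" by simp
    then have e1: "eventually (\<lambda>x. l1 + e > b1 (k1 x)) G"
      using k1 unfolding filterlim_iff by auto
    have "\<forall>y>ereal l2. eventually (\<lambda>x. y > ereal (b2 x)) G2"
      using Limsup_le_iff[where C="ereal l2" and F=G2 and X="\<lambda>y. ereal (b2 y)"] L2 by auto
    from this[rule_format, of "ereal (l2 + e)"] e
    have "eventually (\<lambda>x. ereal (l2 + e) > ereal (b2 x)) G2" by simp
    then have e2: "eventually (\<lambda>x. l2 + e > b2 (k2 x)) G"
      using k2 unfolding filterlim_iff by auto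
    show ?thesis
      using eventually_conj[OF e1 eventually_conj[OF e2 ev]] real e_def
      by (auto elim!: eventually_mono, linarith)
  qed
qed

definition lip :: "('a::metric_space \<Rightarrow> real) \<Rightarrow> real \<Rightarrow> bool" where
  "lip F M \<longleftrightarrow> (\<forall>u v. \<bar>F u - F v\<bar> \<le> M * dist u v)"

lemma cq_bound:
  assumes "lip F M" "snd y > 0"
  shows "\<bar>cq F d y\<bar> \<le> M * norm d"
proof -
  have "\<bar>F (fst y + snd y *\<^sub>R d) - F (fst y)\<bar> \<le> M * dist (fst y + snd y *\<^sub>R d) (fst y)"
    using assms(1) unfolding lip_def by blast
  also have "\<dots> = M * (snd y * norm d)" using assms(2) by (simp add: dist_norm)
  finally show ?thesis using assms(2) unfolding cq_def
    by (simp add: abs_divide pos_divide_le_eq mult_ac)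
qed

lemma cdd_bounds:
  assumes "lip F M"
  shows "clarke_dd F z d \<le> ereal (M * norm d)" "ereal (- (M * norm d)) \<le> clarke_dd F z d"
proof -
  have ev: "eventually (\<lambda>y. \<bar>cq F d y\<bar> \<le> M * norm d) (PF z)"
    using PF_snd_pos by (rule eventually_mono) (use cq_bound[OF assms] in auto)
  show "clarke_dd F z d \<le> ereal (M * norm d)" unfolding clarke_dd_cq
    by (rule Limsup_bounded) (use ev in \<open>auto elim!: eventually_mono\<close>)
  show "ereal (- (M * norm d)) \<le> clarke_dd F z d" unfolding clarke_dd_cq
    by (rule le_Limsup[OF PF_nonbot]) (use ev in \<open>auto elim!: eventually_mono\<close>)
qed

definition cdr :: "('a::real_normed_vector \<Rightarrow> real) \<Rightarrow> 'a \<Rightarrow> 'a \<Rightarrow> real" where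
  "cdr F z d = real_of_ereal (clarke_dd F z d)"

lemma cdd_cdr:
  assumes "lip F M" shows "clarke_dd F z d = ereal (cdr F z d)"
  using cdd_bounds[OF assms, where z=z and d=d] unfolding cdr_def
  by (cases "clarke_dd F z d") auto

lemma cdr_bound:
  assumes "lip F M" shows "cdr F z d \<le> M * norm d"
  using cdd_bounds[OF assms, where z=z and d=d] cdd_cdr[OF assms, where z=z and d=d] by simp

lemma cdd_zero: "clarke_dd F z 0 = 0"
  unfolding clarke_dd_cq cq_def using Limsup_const[OF PF_nonbot] by (simp add: zero_ereal_def)

lemma cdr_zero: "cdr F z 0 = 0"
  unfolding cdr_def cdd_zero by simp

lemma PF_shift_tendsto:
  "((\<lambda>y. fst y + snd y *\<^sub>R d) \<longlongrightarrow> z) (nhds (z::'a::real_normed_vector) \<times>\<^sub>F at_right (0::real))"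
proof -
  have "((\<lambda>y. snd y *\<^sub>R d) \<longlongrightarrow> 0 *\<^sub>R d) (nhds (z::'a::real_normed_vector) \<times>\<^sub>F at_right (0::real))"
    by (intro tendsto_intros PF_snd0)
  then show ?thesis using tendsto_add[OF filterlim_fst] by fastforce
qed

lemma filterlim_shift:
  "filterlim (\<lambda>y. (fst y + snd y *\<^sub>R d, snd y)) (PF z) (PF (z::'a::real_normed_vector))"
  by (intro filterlim_Pair PF_snd PF_shift_tendsto)

lemma cdr_subadd:
  assumes "lip F M" shows "cdr F z (d1 + d2) \<le> cdr F z d1 + cdr F z d2"
proof -
  have "clarke_dd F z (d1 + d2) \<le> ereal (cdr F z d1 + cdr F z d2)"
    unfolding clarke_dd_cq
  proof (rule LS_add[OF filterlim_ident filterlim_shift])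
    show "eventually (\<lambda>y. cq F (d1 + d2) y \<le> cq F d1 y + cq F d2 (fst y + snd y *\<^sub>R d1, snd y)) (PF z)"
      using PF_snd_pos
    proof (rule eventually_mono)
      fix y :: "'a \<times> real" assume "snd y > 0"
      then show "cq F (d1 + d2) y \<le> cq F d1 y + cq F d2 (fst y + snd y *\<^sub>R d1, snd y)"
        unfolding cq_def by (simp add: scaleR_right_distrib add.assoc field_simps)
    qed
    show "Limsup (PF z) (\<lambda>y. ereal (cq F d1 y)) = ereal (cdr F z d1)"
      using cdd_cdr[OF assms] clarke_dd_cq by metis
    show "Limsup (PF z) (\<lambda>y. ereal (cq F d2 y)) = ereal (cdr F z d2)"
      using cdd_cdr[OF assms] clarke_dd_cq by metis
  qed
  then show ?thesis using cdd_cdr[OF assms] by simp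
qed

lemma filterlim_scale:
  assumes "c > 0"
  shows "filterlim (\<lambda>y. (fst y, c * snd y)) (PF z) (PF z)"
proof -
  have "filterlim (\<lambda>y. c * snd y) (at_right 0) (PF z)"
    unfolding filterlim_at
  proof
    show "eventually (\<lambda>y. c * snd y \<in> {0<..} \<and> c * snd y \<noteq> 0) (PF z)"
      using PF_snd_pos by (rule eventually_mono) (use assms in auto)
    show "((\<lambda>y. c * snd y) \<longlongrightarrow> 0) (PF z)"
      using tendsto_mult[OF tendsto_const PF_snd0, of c] by simp
  qed
  then show ?thesis by (intro filterlim_Pair PF_fst)
qed

lemma LS_cmult:
  fixes q :: "'a::topological_space \<times> real \<Rightarrow> real"
  assumes "c \<ge> 0"
  shows "Limsup (PF z) (\<lambda>y. ereal (c * q y)) = ereal c * Limsup (PF z) (\<lambda>y. ereal (q y))"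
proof -
  have "Limsup (PF z) (\<lambda>n. ereal c * ereal (q n)) = ereal c * Limsup (PF z) (\<lambda>y. ereal (q y))"
    by (rule Limsup_ereal_mult_left[OF PF_nonbot assms])
  then show ?thesis by simp
qed

lemma cdr_hom:
  assumes "lip F M" "c \<ge> 0" shows "cdr F z (c *\<^sub>R d) = c * cdr F z d"
proof (cases "c = 0")
  case True then show ?thesis by (simp add: cdr_zero)
next
  case False
  then have c: "c > 0" using assms by simp
  have "clarke_dd F z (c *\<^sub>R d) \<le> Limsup (PF z) (\<lambda>y. ereal (c * cq F d y)) + ereal 0"
    unfolding clarke_dd_cq
  proof (rule LS_comp[OF filterlim_scale[OF c]])
    fix e :: real assume "e > 0"
    show "eventually (\<lambda>y. cq F (c *\<^sub>R d) y \<le> c * cq F d (fst y, c * snd y) + 0 + e) (PF z)"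
      using PF_snd_pos by (rule eventually_mono) (use c \<open>e > 0\<close> in \<open>auto simp: cq_def mult.commute\<close>)
  qed
  also have "\<dots> = ereal c * clarke_dd F z d"
    unfolding clarke_dd_cq using LS_cmult[where c=c and z=z and q="cq F d"] c by simp
  finally have le1: "cdr F z (c *\<^sub>R d) \<le> c * cdr F z d"
    using cdd_cdr[OF assms(1)] by (metis ereal_less_eq(3) times_ereal.simps(1))
  have "ereal c * clarke_dd F z d = Limsup (PF z) (\<lambda>y. ereal (c * cq F d y))"
    unfolding clarke_dd_cq using LS_cmult[where c=c and z=z and q="cq F d"] c by simp
  also have "\<dots> \<le> clarke_dd F z (c *\<^sub>R d) + ereal 0"
    unfolding clarke_dd_cq
  proof (rule LS_comp[OF filterlim_scale, of "inverse c"])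
    show "inverse c > 0" using c by simp
    fix e :: real assume "e > 0"
    show "eventually (\<lambda>y. c * cq F d y \<le> cq F (c *\<^sub>R d) (fst y, inverse c * snd y) + 0 + e) (PF z)"
      using PF_snd_pos by (rule eventually_mono) (use c \<open>e > 0\<close> in \<open>auto simp: cq_def field_simps\<close>)
  qed
  finally have le2: "c * cdr F z d \<le> cdr F z (c *\<^sub>R d)"
    using cdd_cdr[OF assms(1)] by (metis add.right_neutral ereal_less_eq(3) times_ereal.simps(1) zero_ereal_def)
  show ?thesis using le1 le2 by simp
qed


lemma HB:
  fixes p :: "'a::euclidean_space \<Rightarrow> real"
  assumes sub: "\<And>x y. p (x + y) \<le> p x + p y"
    and hom: "\<And>c x. c \<ge> 0 \<Longrightarrow> p (c *\<^sub>R x) = c * p x"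
  shows "\<exists>\<xi>. \<xi> \<bullet> e = p e \<and> (\<forall>d. \<xi> \<bullet> d \<le> p d)"
proof -
  define S where "S = {(e' - e, r - p e) | e' r. p e' < r}"
  have p0: "p 0 = 0" using hom[of 0 0] by simp
  have cvx: "convex S"
    unfolding convex_def
  proof (intro ballI allI impI)
    fix x y and u v :: real
    assume x: "x \<in> S" and y: "y \<in> S" and u: "0 \<le> u" and v: "0 \<le> v" and uv: "u + v = 1"
    from x obtain e1 r1 where x': "x = (e1 - e, r1 - p e)" "p e1 < r1" unfolding S_def by auto
    from y obtain e2 r2 where y': "y = (e2 - e, r2 - p e)" "p e2 < r2" unfolding S_def by auto
    have "p (u *\<^sub>R e1 + v *\<^sub>R e2) \<le> u * p e1 + v * p e2"
      using sub[of "u *\<^sub>R e1" "v *\<^sub>R e2"] hom[OF u, of e1] hom[OF v, of e2] by simp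
    also have "\<dots> < u * r1 + v * r2"
    proof (cases "u = 0")
      case True then show ?thesis using uv x'(2) y'(2) by simp
    next
      case False then have "u > 0" using u by simp
      then have "u * p e1 < u * r1" using x'(2) by simp
      moreover have "v * p e2 \<le> v * r2" using v y'(2) by (simp add: mult_left_mono)
      ultimately show ?thesis by simp
    qed
    finally have lt: "p (u *\<^sub>R e1 + v *\<^sub>R e2) < u * r1 + v * r2" .
    have "u *\<^sub>R x + v *\<^sub>R y = ((u *\<^sub>R e1 + v *\<^sub>R e2) - e, (u * r1 + v * r2) - p e)"
    proof -
      have "u *\<^sub>R (e1 - e) + v *\<^sub>R (e2 - e) = (u *\<^sub>R e1 + v *\<^sub>R e2) - (u + v) *\<^sub>R e"
        by (simp add: algebra_simps)
      moreover have "u * (r1 - p e) + v * (r2 - p e) = (u * r1 + v * r2) - (u + v) * p e"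
        by (simp add: algebra_simps)
      ultimately show ?thesis using x'(1) y'(1) uv by simp
    qed
    then show "u *\<^sub>R x + v *\<^sub>R y \<in> S" unfolding S_def using lt by blast
  qed
  have "0 \<notin> S" unfolding S_def by (auto simp: zero_prod_def)
  from separating_hyperplane_set_0[OF cvx this]
  obtain a where a0: "a \<noteq> 0" and aS: "\<forall>x\<in>S. 0 \<le> a \<bullet> x" by blast
  obtain a1 \<alpha> where a: "a = (a1, \<alpha>)" by (cases a)
  have key: "0 \<le> a1 \<bullet> (e' - e) + \<alpha> * (r - p e)" if "p e' < r" for e' r
  proof -
    have "(e' - e, r - p e) \<in> S" unfolding S_def using that by blast
    then show ?thesis using aS a by (auto simp: inner_Pair)
  qed
  have "0 \<le> \<alpha>" using key[of e "p e + 1"] by simp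
  moreover have "\<alpha> \<noteq> 0"
  proof
    assume "\<alpha> = 0"
    then have "0 \<le> a1 \<bullet> (- a1)" using key[of "e - a1" "p (e - a1) + 1"] by simp
    then have "a1 \<bullet> a1 = 0" using inner_ge_zero[of a1] by simp
    then have "a1 = 0" by simp
    then show False using a0 a \<open>\<alpha> = 0\<close> by (simp add: zero_prod_def)
  qed
  ultimately have al: "\<alpha> > 0" by simp
  define \<xi> where "\<xi> = - (1 / \<alpha>) *\<^sub>R a1"
  have key2: "\<xi> \<bullet> (e' - e) \<le> p e' - p e" for e'
  proof (rule field_le_epsilon)
    fix \<delta> :: real assume "\<delta> > 0"
    then have "0 \<le> a1 \<bullet> (e' - e) + \<alpha> * (p e' + \<delta> - p e)" using key[of e' "p e' + \<delta>"] by simp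
    then have "- (a1 \<bullet> (e' - e)) / \<alpha> \<le> p e' + \<delta> - p e" using al by (simp add: field_simps)
    then show "\<xi> \<bullet> (e' - e) \<le> p e' - p e + \<delta>" unfolding \<xi>_def by simp
  qed
  have 1: "\<xi> \<bullet> e \<ge> p e" using key2[of 0] p0 by simp
  have 2: "\<xi> \<bullet> e \<le> p e" using key2[of "2 *\<^sub>R e"] hom[of 2 e] by (simp add: algebra_simps)
  have 3: "\<xi> \<bullet> d \<le> p d" for d
    using key2[of "e + d"] sub[of e d] by simp
  show ?thesis using 1 2 3 by (intro exI[of _ \<xi>]) auto
qed

lemma SEP:
  fixes p :: "'a::euclidean_space \<Rightarrow> real" and L :: "'b::euclidean_space \<Rightarrow> 'a" and Lt :: "'a \<Rightarrow> 'b"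
  assumes sub: "\<And>x y. p (x + y) \<le> p x + p y"
    and hom: "\<And>c x. c \<ge> 0 \<Longrightarrow> p (c *\<^sub>R x) = c * p x"
    and bnd: "\<And>x. p x \<le> B * norm x"
    and lin: "linear Lt" and adj: "\<And>\<xi> d. Lt \<xi> \<bullet> d = \<xi> \<bullet> L d"
    and v: "\<And>d. v \<bullet> d \<le> p (L d) + c \<bullet> d"
  shows "v \<in> (\<lambda>\<xi>. Lt \<xi> + c) ` {\<xi>. \<forall>d. \<xi> \<bullet> d \<le> p d}"
proof (rule ccontr)
  define K where "K = {\<xi>. \<forall>d. \<xi> \<bullet> d \<le> p d}"
  assume nv: "v \<notin> (\<lambda>\<xi>. Lt \<xi> + c) ` {\<xi>. \<forall>d. \<xi> \<bullet> d \<le> p d}"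
  have KI: "K = (\<Inter>d. {\<xi>. d \<bullet> \<xi> \<le> p d})" unfolding K_def by (auto simp: inner_commute)
  have clK: "closed K" unfolding KI by (intro closed_INT ballI closed_halfspace_le)
  have cvK: "convex K" unfolding KI by (intro convex_INT ballI convex_halfspace_le)
  have bK: "bounded K" unfolding bounded_iff
  proof (intro exI[of _ "max B 0"] ballI)
    fix \<xi> assume "\<xi> \<in> K"
    then have "\<xi> \<bullet> \<xi> \<le> B * norm \<xi>" unfolding K_def using bnd order_trans by blast
    then have "norm \<xi> * norm \<xi> \<le> B * norm \<xi>" by (simp add: power2_norm_eq_inner[symmetric] power2_eq_square)
    then show "norm \<xi> \<le> max B 0"
      by (cases "norm \<xi> = 0") (auto simp: mult_le_cancel_right)
  qed
  have img: "(\<lambda>\<xi>. Lt \<xi> + c) ` K = (\<lambda>x. c + x) ` (Lt ` K)" by (auto simp: image_image add.commute)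
  have blin: "bounded_linear Lt" using lin linear_conv_bounded_linear by blast
  have cl: "closed ((\<lambda>\<xi>. Lt \<xi> + c) ` K)"
  proof (rule compact_imp_closed, rule compact_continuous_image)
    show "continuous_on K (\<lambda>\<xi>. Lt \<xi> + c)"
      by (intro continuous_intros linear_continuous_on blin)
    show "compact K" using clK bK by (simp add: compact_eq_bounded_closed)
  qed
  have cv: "convex ((\<lambda>\<xi>. Lt \<xi> + c) ` K)" unfolding img
    by (intro convex_translation convex_linear_image lin cvK)
  from separating_hyperplane_closed_point[OF cv cl nv[folded K_def]]
  obtain a b where ab: "a \<bullet> v < b" "\<forall>x\<in>(\<lambda>\<xi>. Lt \<xi> + c) ` K. b < a \<bullet> x" by blast
  obtain \<xi> where \<xi>: "\<xi> \<bullet> L (- a) = p (L (- a))" "\<forall>d. \<xi> \<bullet> d \<le> p d"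
    using HB[OF sub hom] by blast
  then have "\<xi> \<in> K" unfolding K_def by simp
  then have "b < a \<bullet> (Lt \<xi> + c)" using ab(2) by blast
  also have "a \<bullet> (Lt \<xi> + c) = - (Lt \<xi> \<bullet> (- a)) + a \<bullet> c" by (simp add: inner_add_right inner_commute)
  also have "\<dots> = - p (L (- a)) + a \<bullet> c" using adj[of \<xi> "- a"] \<xi>(1) by (simp only:)
  also have "\<dots> \<le> a \<bullet> v" using v[of "- a"] by (simp add: inner_commute)
  finally show False using ab(1) by simp
qed

lemma comp_est:
  fixes F :: "'b::real_normed_vector \<Rightarrow> real"
  assumes "lip F M" "M \<ge> 0" "t > 0"
  shows "\<bar>(F P - F u) / t - (F (u + t *\<^sub>R l) - F u) / t\<bar> \<le> M * norm ((1 / t) *\<^sub>R (P - u) - l)"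
proof -
  have "\<bar>(F P - F u) / t - (F (u + t *\<^sub>R l) - F u) / t\<bar> = \<bar>F P - F (u + t *\<^sub>R l)\<bar> / t"
    using assms(3) by (simp add: diff_divide_distrib[symmetric] abs_divide)
  also have "\<dots> \<le> M * dist P (u + t *\<^sub>R l) / t"
    using assms(1,3) unfolding lip_def by (simp add: divide_right_mono)
  also have "dist P (u + t *\<^sub>R l) = t * norm ((1 / t) *\<^sub>R (P - u) - l)"
  proof -
    have "P - (u + t *\<^sub>R l) = t *\<^sub>R ((1 / t) *\<^sub>R (P - u) - l)" using assms(3) by (simp add: algebra_simps)
    then show ?thesis using assms(3) by (simp add: dist_norm)
  qed
  finally show ?thesis using assms(3) by simp
qed

lemma CR_upper:
  fixes F :: "'b::euclidean_space \<Rightarrow> real" and \<Phi> :: "'a::real_normed_vector \<Rightarrow> 'b" and s :: "'a \<Rightarrow> real"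
  assumes lipF: "lip F M" "M \<ge> 0" and cont: "isCont \<Phi> z"
    and PQ: "((\<lambda>y. (1 / snd y) *\<^sub>R (\<Phi> (fst y + snd y *\<^sub>R d) - \<Phi> (fst y))) \<longlongrightarrow> l) (PF z)"
    and sQ: "((\<lambda>y. (s (fst y + snd y *\<^sub>R d) - s (fst y)) / snd y) \<longlongrightarrow> c) (PF z)"
  shows "clarke_dd (\<lambda>w. F (\<Phi> w) + s w) z d \<le> clarke_dd F (\<Phi> z) l + ereal c"
  unfolding clarke_dd_cq
proof (rule LS_comp)
  show "filterlim (\<lambda>y. (\<Phi> (fst y), snd y)) (PF (\<Phi> z)) (PF z)"
    by (intro filterlim_Pair PF_snd isCont_tendsto_compose[OF cont] PF_fst)
  fix e :: real assume e: "e > 0"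
  have e1: "eventually (\<lambda>y. dist ((1 / snd y) *\<^sub>R (\<Phi> (fst y + snd y *\<^sub>R d) - \<Phi> (fst y))) l < e / (2 * (M + 1))) (PF z)"
    using PQ e lipF(2) unfolding tendsto_iff by simp
  have e2: "eventually (\<lambda>y. dist ((s (fst y + snd y *\<^sub>R d) - s (fst y)) / snd y) c < e / 2) (PF z)"
    using sQ[unfolded tendsto_iff, rule_format, of "e/2"] e by simp
  show "eventually (\<lambda>y. cq (\<lambda>w. F (\<Phi> w) + s w) d y \<le> cq F l (\<Phi> (fst y), snd y) + c + e) (PF z)"
    using eventually_conj[OF PF_snd_pos eventually_conj[OF e1 e2]]
  proof (rule eventually_mono, clarify)
    fix w t assume t: "snd (w, t) > 0"
      and d1: "dist ((1 / snd (w, t)) *\<^sub>R (\<Phi> (fst (w, t) + snd (w, t) *\<^sub>R d) - \<Phi> (fst (w, t)))) l < e / (2 * (M + 1))"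
      and d2: "dist ((s (fst (w, t) + snd (w, t) *\<^sub>R d) - s (fst (w, t))) / snd (w, t)) c < e / 2"
    have t0: "t > 0" using t by simp
    have est: "\<bar>(F (\<Phi> (w + t *\<^sub>R d)) - F (\<Phi> w)) / t - (F (\<Phi> w + t *\<^sub>R l) - F (\<Phi> w)) / t\<bar>
          \<le> M * norm ((1 / t) *\<^sub>R (\<Phi> (w + t *\<^sub>R d) - \<Phi> w) - l)"
      by (rule comp_est[OF lipF t0])
    have "M * norm ((1 / t) *\<^sub>R (\<Phi> (w + t *\<^sub>R d) - \<Phi> w) - l) \<le> M * (e / (2 * (M + 1)))"
      using d1 lipF(2) by (intro mult_left_mono) (auto simp: dist_norm)
    also have "\<dots> \<le> e / 2" using lipF(2) e by (simp add: field_simps)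
    finally have A: "(F (\<Phi> (w + t *\<^sub>R d)) - F (\<Phi> w)) / t \<le> (F (\<Phi> w + t *\<^sub>R l) - F (\<Phi> w)) / t + e / 2"
      using est by linarith
    have B: "(s (w + t *\<^sub>R d) - s w) / t \<le> c + e / 2" using d2 unfolding dist_real_def abs_less_iff fst_conv snd_conv by linarith
    have "cq (\<lambda>w. F (\<Phi> w) + s w) d (w, t) = (F (\<Phi> (w + t *\<^sub>R d)) - F (\<Phi> w)) / t + (s (w + t *\<^sub>R d) - s w) / t"
      unfolding cq_def by (simp add: diff_divide_distrib[symmetric] add_divide_distrib[symmetric] algebra_simps)
    then show "cq (\<lambda>w. F (\<Phi> w) + s w) d (w, t) \<le> cq F l (\<Phi> (fst (w, t)), snd (w, t)) + c + e"
      using A B unfolding cq_def by simp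
  qed
qed

lemma CR_lower:
  fixes F :: "'b::euclidean_space \<Rightarrow> real" and \<Phi> :: "'a::real_normed_vector \<Rightarrow> 'b" and s :: "'a \<Rightarrow> real"
  assumes lipF: "lip F M" "M \<ge> 0"
    and PQ: "((\<lambda>y. (1 / snd y) *\<^sub>R (\<Phi> (fst y + snd y *\<^sub>R d) - \<Phi> (fst y))) \<longlongrightarrow> l) (PF z)"
    and sQ: "((\<lambda>y. (s (fst y + snd y *\<^sub>R d) - s (fst y)) / snd y) \<longlongrightarrow> c) (PF z)"
    and reg: "clarke_regular_at F (\<Phi> z)"
  shows "clarke_dd F (\<Phi> z) l + ereal c \<le> clarke_dd (\<lambda>w. F (\<Phi> w) + s w) z d"
proof -
  have kf: "filterlim (\<lambda>t. (z, t)) (PF z) (at_right 0)"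
    by (intro filterlim_Pair tendsto_const filterlim_ident)
  have "((\<lambda>t. ereal ((F (\<Phi> z + t *\<^sub>R l) - F (\<Phi> z)) / t)) \<longlongrightarrow> clarke_dd F (\<Phi> z) l) (at_right 0)"
    using reg unfolding clarke_regular_at_def by blast
  then have lim: "Limsup (at_right 0) (\<lambda>t. ereal ((F (\<Phi> z + t *\<^sub>R l) - F (\<Phi> z)) / t)) = clarke_dd F (\<Phi> z) l"
    by (intro lim_imp_Limsup) (simp add: trivial_limit_at_right_real)
  have "Limsup (at_right 0) (\<lambda>t. ereal ((F (\<Phi> z + t *\<^sub>R l) - F (\<Phi> z)) / t))
      \<le> Limsup (PF z) (\<lambda>y. ereal (cq (\<lambda>w. F (\<Phi> w) + s w) d y)) + ereal (- c)"
  proof (rule LS_comp[OF kf])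
    fix e :: real assume e: "e > 0"
    have PQ': "((\<lambda>t. (1 / t) *\<^sub>R (\<Phi> (z + t *\<^sub>R d) - \<Phi> z)) \<longlongrightarrow> l) (at_right 0)"
      using filterlim_compose[OF PQ kf] by simp
    have sQ': "((\<lambda>t. (s (z + t *\<^sub>R d) - s z) / t) \<longlongrightarrow> c) (at_right 0)"
      using filterlim_compose[OF sQ kf] by simp
    have e1: "eventually (\<lambda>t. dist ((1 / t) *\<^sub>R (\<Phi> (z + t *\<^sub>R d) - \<Phi> z)) l < e / (2 * (M + 1))) (at_right 0)"
      using PQ' e lipF(2) unfolding tendsto_iff by simp
    have e2: "eventually (\<lambda>t. dist ((s (z + t *\<^sub>R d) - s z) / t) c < e / 2) (at_right 0)"
      using sQ'[unfolded tendsto_iff, rule_format, of "e/2"] e by simp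
    show "eventually (\<lambda>t. (F (\<Phi> z + t *\<^sub>R l) - F (\<Phi> z)) / t
            \<le> cq (\<lambda>w. F (\<Phi> w) + s w) d (z, t) + - c + e) (at_right 0)"
      using eventually_conj[OF eventually_at_right_less eventually_conj[OF e1 e2]]
    proof (rule eventually_mono, clarify)
      fix t :: real assume t0: "0 < t"
        and d1: "dist ((1 / t) *\<^sub>R (\<Phi> (z + t *\<^sub>R d) - \<Phi> z)) l < e / (2 * (M + 1))"
        and d2: "dist ((s (z + t *\<^sub>R d) - s z) / t) c < e / 2"
      have est: "\<bar>(F (\<Phi> (z + t *\<^sub>R d)) - F (\<Phi> z)) / t - (F (\<Phi> z + t *\<^sub>R l) - F (\<Phi> z)) / t\<bar>
            \<le> M * norm ((1 / t) *\<^sub>R (\<Phi> (z + t *\<^sub>R d) - \<Phi> z) - l)"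
        by (rule comp_est[OF lipF t0])
      have "M * norm ((1 / t) *\<^sub>R (\<Phi> (z + t *\<^sub>R d) - \<Phi> z) - l) \<le> M * (e / (2 * (M + 1)))"
        using d1 lipF(2) by (intro mult_left_mono) (auto simp: dist_norm)
      also have "\<dots> \<le> e / 2" using lipF(2) e by (simp add: field_simps)
      finally have A: "(F (\<Phi> z + t *\<^sub>R l) - F (\<Phi> z)) / t \<le> (F (\<Phi> (z + t *\<^sub>R d)) - F (\<Phi> z)) / t + e / 2"
        using est by linarith
      have B: "c \<le> (s (z + t *\<^sub>R d) - s z) / t + e / 2" using d2 unfolding dist_real_def abs_less_iff by linarith
      have "cq (\<lambda>w. F (\<Phi> w) + s w) d (z, t) = (F (\<Phi> (z + t *\<^sub>R d)) - F (\<Phi> z)) / t + (s (z + t *\<^sub>R d) - s z) / t"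
        unfolding cq_def by (simp add: diff_divide_distrib[symmetric] add_divide_distrib[symmetric] algebra_simps)
      then show "(F (\<Phi> z + t *\<^sub>R l) - F (\<Phi> z)) / t \<le> cq (\<lambda>w. F (\<Phi> w) + s w) d (z, t) + - c + e"
        using A B by simp
    qed
  qed
  then have "clarke_dd F (\<Phi> z) l \<le> clarke_dd (\<lambda>w. F (\<Phi> w) + s w) z d + ereal (- c)"
    using lim clarke_dd_cq by metis
  then show ?thesis
    by (cases "clarke_dd (\<lambda>w. F (\<Phi> w) + s w) z d"; cases "clarke_dd F (\<Phi> z) l") auto
qed


lemma tendsto_mv:
  fixes A :: "'x \<Rightarrow> real^'n^'m"
  assumes "(A \<longlongrightarrow> A0) F" "(v \<longlongrightarrow> v0) F"
  shows "((\<lambda>t. A t *v v t) \<longlongrightarrow> A0 *v v0) F"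
  unfolding matrix_vector_mult_def by (intro tendsto_intros assms)

lemma tendsto_vm:
  fixes A :: "'x \<Rightarrow> real^'n^'m"
  assumes "(A \<longlongrightarrow> A0) F" "(v \<longlongrightarrow> v0) F"
  shows "((\<lambda>t. v t v* A t) \<longlongrightarrow> v0 v* A0) F"
  unfolding vector_matrix_mult_def by (intro tendsto_intros assms)

lemma tendsto_mm:
  fixes A :: "'x \<Rightarrow> real^'n^'m" and B :: "'x \<Rightarrow> real^'k^'n"
  assumes "(A \<longlongrightarrow> A0) F" "(B \<longlongrightarrow> B0) F"
  shows "((\<lambda>t. A t ** B t) \<longlongrightarrow> A0 ** B0) F"
  unfolding matrix_matrix_mult_def by (intro tendsto_intros assms)

lemma line_deriv:
  assumes "(f has_derivative f') (at (p + \<tau> *\<^sub>R v))"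
  shows "((\<lambda>\<tau>. f (p + \<tau> *\<^sub>R v)) has_vector_derivative f' v) (at \<tau>)"
proof -
  have l: "((\<lambda>\<tau>. p + \<tau> *\<^sub>R v) has_derivative (\<lambda>h. h *\<^sub>R v)) (at \<tau>)"
    by (auto intro!: derivative_eq_intros)
  have "((\<lambda>\<tau>. f (p + \<tau> *\<^sub>R v)) has_derivative (\<lambda>h. f' (h *\<^sub>R v))) (at \<tau>)"
    using has_derivative_compose[OF l assms] by simp
  moreover have "f' (h *\<^sub>R v) = h *\<^sub>R f' v" for h
    using has_derivative_linear[OF assms] by (simp add: linear_scale)
  ultimately show ?thesis unfolding has_vector_derivative_def by simp
qed

lemma mvb:
  fixes f :: "real \<Rightarrow> 'b::real_normed_vector"
  assumes der: "\<And>\<tau>. \<tau> \<in> closed_segment 0 t \<Longrightarrow> (f has_vector_derivative f' \<tau>) (at \<tau>)"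
    and bnd: "\<And>\<tau>. \<tau> \<in> closed_segment 0 t \<Longrightarrow> norm (f' \<tau> - K) \<le> B"
  shows "norm (f t - f 0 - t *\<^sub>R K) \<le> 3 * B * \<bar>t\<bar>"
proof -
  have 0: "0 \<in> closed_segment 0 t" by simp
  have B0: "0 \<le> B" using bnd[OF 0] norm_ge_zero order_trans by blast
  have "norm (f t - f 0 - (t - 0) *\<^sub>R f' 0) \<le> norm (t - 0) * (2 * B)"
  proof (rule vector_differentiable_bound_linearization[where S="closed_segment 0 t"])
    show "(f has_vector_derivative f' x) (at x within closed_segment 0 t)" if "x \<in> closed_segment 0 t" for x
      using der[OF that] by (rule has_vector_derivative_at_within)
    show "closed_segment 0 t \<subseteq> closed_segment 0 t" by simp
    show "norm (f' x - f' 0) \<le> 2 * B" if "x \<in> closed_segment 0 t" for x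
    proof -
      have "norm (f' x - f' 0) \<le> norm (f' x - K) + norm (f' 0 - K)"
        using norm_triangle_ineq4[of "f' x - K" "f' 0 - K"] by simp
      then show ?thesis using bnd[OF that] bnd[OF 0] by simp
    qed
    show "0 \<in> closed_segment 0 t" by simp
  qed
  then have 1: "norm (f t - f 0 - t *\<^sub>R f' 0) \<le> 2 * B * \<bar>t\<bar>" by (simp add: ac_simps)
  have "norm (f t - f 0 - t *\<^sub>R K) \<le> norm (f t - f 0 - t *\<^sub>R f' 0) + norm (t *\<^sub>R (f' 0 - K))"
    using norm_triangle_ineq[of "f t - f 0 - t *\<^sub>R f' 0" "t *\<^sub>R (f' 0 - K)"]
    by (simp add: algebra_simps)
  also have "norm (t *\<^sub>R (f' 0 - K)) \<le> \<bar>t\<bar> * B" using bnd[OF 0] by (simp add: mult_left_mono)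
  finally show ?thesis using 1 by (simp add: algebra_simps)
qed

lemma strict_dir:
  fixes f :: "'a::real_normed_vector \<Rightarrow> 'b::real_normed_vector"
  assumes der: "\<And>w. (f has_derivative f' w) (at w)"
    and cont: "isCont (\<lambda>w. f' w d) z"
  shows "((\<lambda>y. (1 / snd y) *\<^sub>R (f (fst y + snd y *\<^sub>R d) - f (fst y))) \<longlongrightarrow> f' z d) (PF z)"
  unfolding tendsto_iff
proof (intro allI impI)
  fix \<epsilon> :: real assume \<epsilon>: "\<epsilon> > 0"
  obtain \<delta> where \<delta>: "\<delta> > 0" and c: "\<And>u. dist u z < \<delta> \<Longrightarrow> dist (f' u d) (f' z d) < \<epsilon> / 8"
    using cont \<epsilon> unfolding continuous_at_eps_delta by (metis zero_less_divide_iff zero_less_numeral)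
  define r where "r = \<delta> / (2 * (norm d + 1))"
  have "0 < 2 * norm d + 2" using norm_ge_zero[of d] by linarith
  then have r: "r > 0" using \<delta> unfolding r_def by simp
  have e1: "eventually (\<lambda>y. dist (fst y) z < \<delta> / 2) (PF z)"
    using PF_fst[of z, unfolded tendsto_iff, rule_format, of "\<delta>/2"] \<delta> by simp
  have e2: "eventually (\<lambda>y. dist (snd y) 0 < r) (PF z)"
    using PF_snd0[of z] r unfolding tendsto_iff by simp
  show "eventually (\<lambda>y. dist ((1 / snd y) *\<^sub>R (f (fst y + snd y *\<^sub>R d) - f (fst y))) (f' z d) < \<epsilon>) (PF z)"
    using eventually_conj[OF PF_snd_pos eventually_conj[OF e1 e2]]
  proof (rule eventually_mono, clarify)
    fix w :: 'a and t :: real assume t0: "0 < snd (w, t)" and w: "dist (fst (w, t)) z < \<delta> / 2" and tr: "dist (snd (w, t)) 0 < r"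
    then have t0: "t > 0" and w: "dist w z < \<delta> / 2" and tr: "t < r" by (auto simp: dist_real_def)
    have near: "dist (w + \<tau> *\<^sub>R d) z < \<delta>" if "\<tau> \<in> closed_segment 0 t" for \<tau>
    proof -
      have "\<bar>\<tau>\<bar> \<le> t" using that t0 by (auto simp: closed_segment_eq_real_ivl)
      then have "\<bar>\<tau>\<bar> * norm d \<le> r * norm d" using tr by (intro mult_right_mono) auto
      also have "r * norm d < \<delta> / 2"
      proof -
        have nd: "norm d + 1 > 0" using norm_ge_zero[of d] by linarith
        have "r * norm d = (\<delta> / 2) * (norm d / (norm d + 1))" unfolding r_def by (simp add: field_simps)
        moreover have "norm d / (norm d + 1) < 1" using nd by (simp add: divide_less_eq)
        moreover have "(\<delta> / 2) * (norm d / (norm d + 1)) < (\<delta> / 2) * 1"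
          using \<delta> \<open>norm d / (norm d + 1) < 1\<close> by (intro mult_strict_left_mono) auto
        ultimately show ?thesis by linarith
      qed
      finally have "norm (\<tau> *\<^sub>R d) < \<delta> / 2" by simp
      moreover have "dist (w + \<tau> *\<^sub>R d) z \<le> dist w z + norm (\<tau> *\<^sub>R d)"
        by (metis dist_norm dist_triangle2 add_diff_cancel_left' norm_minus_commute)
      ultimately show ?thesis using w by simp
    qed
    have "norm (f (w + t *\<^sub>R d) - f (w + 0 *\<^sub>R d) - t *\<^sub>R f' z d) \<le> 3 * (\<epsilon> / 8) * \<bar>t\<bar>"
    proof (rule mvb[where f="\<lambda>\<tau>. f (w + \<tau> *\<^sub>R d)" and f'="\<lambda>\<tau>. f' (w + \<tau> *\<^sub>R d) d"])
      show "((\<lambda>\<tau>. f (w + \<tau> *\<^sub>R d)) has_vector_derivative f' (w + \<tau> *\<^sub>R d) d) (at \<tau>)" for \<tau>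
        by (rule line_deriv[OF der])
      show "norm (f' (w + \<tau> *\<^sub>R d) d - f' z d) \<le> \<epsilon> / 8" if "\<tau> \<in> closed_segment 0 t" for \<tau>
        using c[OF near[OF that]] by (simp add: dist_norm)
    qed
    then have "norm (f (w + t *\<^sub>R d) - f w - t *\<^sub>R f' z d) \<le> 3 * (\<epsilon> / 8) * t" using t0 by simp
    moreover have "(1 / t) *\<^sub>R (f (w + t *\<^sub>R d) - f w) - f' z d = (1 / t) *\<^sub>R (f (w + t *\<^sub>R d) - f w - t *\<^sub>R f' z d)"
      using t0 by (simp add: algebra_simps)
    ultimately have "norm ((1 / t) *\<^sub>R (f (w + t *\<^sub>R d) - f w) - f' z d) \<le> 3 * (\<epsilon> / 8)"
      using t0 by (simp add: divide_simps mult.commute)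
    then show "dist ((1 / snd (w, t)) *\<^sub>R (f (fst (w, t) + snd (w, t) *\<^sub>R d) - f (fst (w, t)))) (f' z d) < \<epsilon>"
      using \<epsilon> by (simp add: dist_norm)
  qed
qed

lemma dirquot:
  fixes f :: "'a::real_normed_vector \<Rightarrow> real"
  assumes "(f has_derivative f') (at u)"
  shows "((\<lambda>s. (f (u + s *\<^sub>R a) - f u) / s) \<longlongrightarrow> f' a) (at 0)"
proof -
  have "((\<lambda>s. f (u + s *\<^sub>R a)) has_vector_derivative f' a) (at 0)"
    using line_deriv[of f f' u 0 a] assms by simp
  then have "((\<lambda>s. f (u + s *\<^sub>R a)) has_field_derivative f' a) (at 0)"
    by (simp add: has_real_derivative_iff_has_vector_derivative)
  then show ?thesis unfolding DERIV_def by simp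
qed

lemma dirquot_vec:
  fixes f :: "'a::real_normed_vector \<Rightarrow> 'b::real_normed_vector"
  assumes "(f has_derivative f') (at u)"
  shows "((\<lambda>s. (1 / s) *\<^sub>R (f (u + s *\<^sub>R a) - f u)) \<longlongrightarrow> f' a) (at 0)"
proof -
  have "((\<lambda>s. f (u + s *\<^sub>R a)) has_vector_derivative f' a) (at 0)"
    using line_deriv[of f f' u 0 a] assms by simp
  then have "((\<lambda>s. f (u + s *\<^sub>R a)) has_derivative (\<lambda>h. h *\<^sub>R f' a)) (at 0)"
    unfolding has_vector_derivative_def .
  then have "((\<lambda>h. norm (f (u + h *\<^sub>R a) - f u - h *\<^sub>R f' a) / \<bar>h\<bar>) \<longlongrightarrow> 0) (at 0)"
    unfolding has_derivative_at by simp
  then have "((\<lambda>y. (1 / y) *\<^sub>R (f (u + y *\<^sub>R a) - f u) - f' a) \<longlongrightarrow> 0) (at 0)"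
  proof (rule Lim_null_comparison[rotated])
    show "eventually (\<lambda>y. norm ((1 / y) *\<^sub>R (f (u + y *\<^sub>R a) - f u) - f' a)
        \<le> norm (f (u + y *\<^sub>R a) - f u - y *\<^sub>R f' a) / \<bar>y\<bar>) (at (0::real))"
      unfolding eventually_at_filter
    proof (rule always_eventually, intro allI impI)
      fix y :: real assume "y \<noteq> 0"
      then have "(1 / y) *\<^sub>R (f (u + y *\<^sub>R a) - f u) - f' a = (1 / y) *\<^sub>R (f (u + y *\<^sub>R a) - f u - y *\<^sub>R f' a)"
        by (simp add: algebra_simps)
      then show "norm ((1 / y) *\<^sub>R (f (u + y *\<^sub>R a) - f u) - f' a) \<le> norm (f (u + y *\<^sub>R a) - f u - y *\<^sub>R f' a) / \<bar>y\<bar>"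
        by (simp add: divide_simps)
    qed
  qed
  then show ?thesis using Lim_null by blast
qed


lemma small_mult:
  fixes x r :: real
  assumes "\<bar>x\<bar> < r" "r = \<delta> / (2 * (norm v + 1))" "\<delta> > 0"
  shows "\<bar>x\<bar> * norm v < \<delta> / 2"
proof -
  have nd: "norm v + 1 > 0" using norm_ge_zero[of v] by linarith
  have "\<bar>x\<bar> * norm v \<le> r * norm v" using assms(1) by (intro mult_right_mono) auto
  also have "r * norm v = (\<delta> / 2) * (norm v / (norm v + 1))" unfolding assms(2) by (simp add: field_simps)
  also have "(\<delta> / 2) * (norm v / (norm v + 1)) < (\<delta> / 2) * 1"
    using assms(3) nd by (intro mult_strict_left_mono) (auto simp: divide_less_eq)
  finally show ?thesis by simp
qed

lemma peano:
  fixes \<phi> :: "'a::real_normed_vector \<Rightarrow> real"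
  assumes der: "\<And>w. (\<phi> has_derivative D\<phi> w) (at w)"
    and derb: "\<And>w. ((\<lambda>w. D\<phi> w b) has_derivative Db w) (at w)"
    and cont: "isCont (\<lambda>w. Db w a) z"
  shows "((\<lambda>t. (D\<phi> (z + t *\<^sub>R b) a - D\<phi> z a) / t) \<longlongrightarrow> Db z a) (at 0)"
  unfolding tendsto_iff
proof (intro allI impI)
  fix \<epsilon> :: real assume \<epsilon>: "\<epsilon> > 0"
  define C where "C = Db z a"
  define e1 where "e1 = \<epsilon> / 20"
  have e1: "e1 > 0" using \<epsilon> e1_def by simp
  obtain \<delta> where \<delta>: "\<delta> > 0" and c: "\<And>u. dist u z < \<delta> \<Longrightarrow> dist (Db u a) C < e1"
    using cont e1 unfolding continuous_at_eps_delta C_def by metis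
  define ra where "ra = \<delta> / (2 * (norm a + 1))"
  define rb where "rb = \<delta> / (2 * (norm b + 1))"
  have "0 < 2 * norm a + 2" "0 < 2 * norm b + 2" using norm_ge_zero[of a] norm_ge_zero[of b] by linarith+
  then have ra: "ra > 0" and rb: "rb > 0" using \<delta> unfolding ra_def rb_def by simp_all
  have main: "\<bar>(D\<phi> (z + t *\<^sub>R b) a - D\<phi> z a) / t - C\<bar> \<le> 9 * e1" if t0: "t \<noteq> 0" and tb: "\<bar>t\<bar> < rb" for t
  proof -
    define \<Delta> where "\<Delta> s = (\<phi> ((z + t *\<^sub>R b) + s *\<^sub>R a) - \<phi> (z + t *\<^sub>R b)) - (\<phi> (z + s *\<^sub>R a) - \<phi> z)" for s
    have est: "\<bar>\<Delta> s - t * s * C\<bar> \<le> 9 * e1 * \<bar>s\<bar> * \<bar>t\<bar>" if sa: "\<bar>s\<bar> < ra" for s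
    proof -
      define \<psi> where "\<psi> \<tau> = \<phi> ((z + s *\<^sub>R a) + \<tau> *\<^sub>R b) - \<phi> (z + \<tau> *\<^sub>R b)" for \<tau>
      define \<psi>' where "\<psi>' \<tau> = D\<phi> ((z + s *\<^sub>R a) + \<tau> *\<^sub>R b) b - D\<phi> (z + \<tau> *\<^sub>R b) b" for \<tau>
      have d\<psi>: "(\<psi> has_vector_derivative \<psi>' \<tau>) (at \<tau>)" for \<tau>
        unfolding \<psi>_def \<psi>'_def
        by (intro has_vector_derivative_diff line_deriv der)
      have b\<psi>: "norm (\<psi>' \<tau> - s * C) \<le> 3 * e1 * \<bar>s\<bar>" if \<tau>: "\<tau> \<in> closed_segment 0 t" for \<tau>
      proof -
        have \<tau>t: "\<bar>\<tau>\<bar> < rb" using \<tau> tb by (auto simp: closed_segment_eq_real_ivl split: if_splits)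
        have "norm ((\<lambda>\<sigma>. D\<phi> ((z + \<tau> *\<^sub>R b) + \<sigma> *\<^sub>R a) b) s - (\<lambda>\<sigma>. D\<phi> ((z + \<tau> *\<^sub>R b) + \<sigma> *\<^sub>R a) b) 0 - s *\<^sub>R C)
            \<le> 3 * e1 * \<bar>s\<bar>"
        proof (rule mvb[where f'="\<lambda>\<sigma>. Db ((z + \<tau> *\<^sub>R b) + \<sigma> *\<^sub>R a) a"])
          show "((\<lambda>\<sigma>. D\<phi> ((z + \<tau> *\<^sub>R b) + \<sigma> *\<^sub>R a) b) has_vector_derivative Db ((z + \<tau> *\<^sub>R b) + \<sigma> *\<^sub>R a) a) (at \<sigma>)" for \<sigma>
            by (rule line_deriv[OF derb])
          show "norm (Db ((z + \<tau> *\<^sub>R b) + \<sigma> *\<^sub>R a) a - C) \<le> e1" if \<sigma>: "\<sigma> \<in> closed_segment 0 s" for \<sigma>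
          proof -
            have \<sigma>s: "\<bar>\<sigma>\<bar> < ra" using \<sigma> sa by (auto simp: closed_segment_eq_real_ivl split: if_splits)
            have "dist ((z + \<tau> *\<^sub>R b) + \<sigma> *\<^sub>R a) z \<le> norm (\<tau> *\<^sub>R b) + norm (\<sigma> *\<^sub>R a)"
              using norm_triangle_ineq[of "\<tau> *\<^sub>R b" "\<sigma> *\<^sub>R a"] by (simp add: dist_norm)
            also have "\<dots> < \<delta> / 2 + \<delta> / 2"
              using small_mult[OF \<tau>t rb_def \<delta>] small_mult[OF \<sigma>s ra_def \<delta>] by simp
            finally have "dist ((z + \<tau> *\<^sub>R b) + \<sigma> *\<^sub>R a) z < \<delta>" by simp
            then show ?thesis using c by (simp add: dist_norm less_imp_le)
          qed
        qed
        moreover have "(z + \<tau> *\<^sub>R b) + s *\<^sub>R a = (z + s *\<^sub>R a) + \<tau> *\<^sub>R b" by (simp add: algebra_simps)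
        ultimately show ?thesis unfolding \<psi>'_def by simp
      qed
      have "norm (\<psi> t - \<psi> 0 - t *\<^sub>R (s * C)) \<le> 3 * (3 * e1 * \<bar>s\<bar>) * \<bar>t\<bar>"
        by (rule mvb[OF d\<psi> b\<psi>])
      moreover have "\<psi> t - \<psi> 0 = \<Delta> s"
        unfolding \<psi>_def \<Delta>_def by (simp add: algebra_simps)
      ultimately show ?thesis by (simp add: algebra_simps)
    qed
    define L where "L = D\<phi> (z + t *\<^sub>R b) a - D\<phi> z a"
    have lim: "((\<lambda>s. \<Delta> s / s) \<longlongrightarrow> L) (at 0)"
    proof -
      have "((\<lambda>s. (\<phi> ((z + t *\<^sub>R b) + s *\<^sub>R a) - \<phi> (z + t *\<^sub>R b)) / s - (\<phi> (z + s *\<^sub>R a) - \<phi> z) / s)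
          \<longlongrightarrow> L) (at 0)"
        unfolding L_def by (intro tendsto_diff dirquot der)
      then show ?thesis unfolding \<Delta>_def by (simp add: diff_divide_distrib)
    qed
    have "\<bar>L - t * C\<bar> \<le> 9 * e1 * \<bar>t\<bar>"
    proof (rule tendsto_upperbound)
      show "((\<lambda>s. \<bar>\<Delta> s / s - t * C\<bar>) \<longlongrightarrow> \<bar>L - t * C\<bar>) (at 0)"
        by (intro tendsto_intros lim)
      show "eventually (\<lambda>s. \<bar>\<Delta> s / s - t * C\<bar> \<le> 9 * e1 * \<bar>t\<bar>) (at (0::real))"
        unfolding eventually_at
      proof (intro exI[of _ ra] conjI ballI impI allI)
        show "ra > 0" by (rule ra)
        fix s :: real assume "s \<noteq> 0 \<and> dist s 0 < ra"
        then have s0: "s \<noteq> 0" and sa: "\<bar>s\<bar> < ra" by auto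
        have "\<Delta> s / s - t * C = (\<Delta> s - t * s * C) / s" using s0 by (simp add: field_simps)
        then have "\<bar>\<Delta> s / s - t * C\<bar> = \<bar>\<Delta> s - t * s * C\<bar> / \<bar>s\<bar>" by (simp add: abs_divide)
        also have "\<dots> \<le> (9 * e1 * \<bar>s\<bar> * \<bar>t\<bar>) / \<bar>s\<bar>"
          using est[OF sa] by (intro divide_right_mono) auto
        also have "\<dots> = 9 * e1 * \<bar>t\<bar>" using s0 by simp
        finally show "\<bar>\<Delta> s / s - t * C\<bar> \<le> 9 * e1 * \<bar>t\<bar>" .
      qed
    qed simp
    then have "\<bar>L - t * C\<bar> / \<bar>t\<bar> \<le> 9 * e1" using t0 by (simp add: divide_le_eq mult.commute)
    moreover have "(L / t - C) = (L - t * C) / t" using t0 by (simp add: field_simps)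
    ultimately show ?thesis unfolding L_def by (simp add: abs_divide)
  qed
  show "eventually (\<lambda>t. dist ((D\<phi> (z + t *\<^sub>R b) a - D\<phi> z a) / t) (Db z a) < \<epsilon>) (at (0::real))"
    unfolding eventually_at
  proof (intro exI[of _ rb] conjI ballI impI allI)
    show "rb > 0" by (rule rb)
    fix t :: real assume "t \<noteq> 0 \<and> dist t 0 < rb"
    then have "\<bar>(D\<phi> (z + t *\<^sub>R b) a - D\<phi> z a) / t - C\<bar> \<le> 9 * e1" by (intro main) auto
    then show "dist ((D\<phi> (z + t *\<^sub>R b) a - D\<phi> z a) / t) (Db z a) < \<epsilon>"
      using \<epsilon> unfolding e1_def C_def dist_real_def by simp
  qed
qed


lemma has_derivative_vecI:
  fixes f :: "'a::real_normed_vector \<Rightarrow> real^'m"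
  assumes "\<And>j. ((\<lambda>w. f w $ j) has_derivative (\<lambda>e. f' e $ j)) (at u)"
  shows "(f has_derivative f') (at u)"
proof -
  have "(f has_derivative f') (at u within UNIV)"
  proof (rule has_derivative_componentwise_within[THEN iffD2], rule ballI)
    fix i :: "real^'m" assume "i \<in> Basis"
    then obtain j where i: "i = axis j 1" using axis_inverse by blast
    have "(\<lambda>x. f x \<bullet> i) = (\<lambda>w. f w $ j)" "(\<lambda>x. f' x \<bullet> i) = (\<lambda>e. f' e $ j)"
      unfolding i by (simp_all add: inner_axis)
    then show "((\<lambda>x. f x \<bullet> i) has_derivative (\<lambda>x. f' x \<bullet> i)) (at u within UNIV)"
      using assms[of j] by simp
  qed
  then show ?thesis .
qed

lemma lip_isCont:
  assumes "\<And>w. dist (f w) (f z) \<le> K * dist w z"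
  shows "isCont f z"
  unfolding continuous_at_eps_delta
proof (intro allI impI)
  fix e :: real assume e: "e > 0"
  show "\<exists>d>0. \<forall>x'. dist x' z < d \<longrightarrow> dist (f x') (f z) < e"
  proof (intro exI[of _ "e / (\<bar>K\<bar> + 1)"] conjI allI impI)
    show "e / (\<bar>K\<bar> + 1) > 0" using e by simp
    fix x' assume "dist x' z < e / (\<bar>K\<bar> + 1)"
    then have "(\<bar>K\<bar> + 1) * dist x' z < e" by (simp add: field_simps)
    moreover have "dist (f x') (f z) \<le> (\<bar>K\<bar> + 1) * dist x' z"
      using assms[of x'] by (smt (verit) mult_right_mono zero_le_dist abs_ge_self)
    ultimately show "dist (f x') (f z) < e" by simp
  qed
qed

lemma lin_fst_expand:
  fixes L :: "(real^'n) \<times> (real^'p) \<Rightarrow> 'v::real_vector"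
  assumes "linear L"
  shows "L (u, 0) = (\<Sum>k\<in>UNIV. u $ k *\<^sub>R L (axis k 1, 0))"
proof -
  have lin: "linear (\<lambda>v. L (v, 0::real^'p))"
  proof (rule linearI)
    show "L (b1 + b2, 0::real^'p) = L (b1, 0) + L (b2, 0)" for b1 b2
      using linear_add[OF assms, of "(b1, 0)" "(b2, 0)"] by simp
    show "L (r *\<^sub>R b, 0::real^'p) = r *\<^sub>R L (b, 0)" for r b
      using linear_scale[OF assms, of r "(b, 0)"] by simp
  qed
  have "L (u, 0) = L ((\<Sum>k\<in>UNIV. u $ k *\<^sub>R axis k 1), 0)"
    using basis_expansion[of u] by (simp add: scalar_mult_eq_scaleR)
  also have "\<dots> = (\<Sum>k\<in>UNIV. u $ k *\<^sub>R L (axis k 1, 0))"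
    by (simp only: linear_sum[OF lin] linear_scale[OF lin])
  finally show ?thesis .
qed

lemma lin_snd_expand:
  fixes L :: "(real^'n) \<times> (real^'p) \<Rightarrow> 'v::real_vector"
  assumes "linear L"
  shows "L (0, v) = (\<Sum>k\<in>UNIV. v $ k *\<^sub>R L (0, axis k 1))"
proof -
  have lin: "linear (\<lambda>v. L (0::real^'n, v))"
  proof (rule linearI)
    show "L (0::real^'n, b1 + b2) = L (0, b1) + L (0, b2)" for b1 b2
      using linear_add[OF assms, of "(0, b1)" "(0, b2)"] by simp
    show "L (0::real^'n, r *\<^sub>R b) = r *\<^sub>R L (0, b)" for r b
      using linear_scale[OF assms, of r "(0, b)"] by simp
  qed
  have "L (0, v) = L (0, (\<Sum>k\<in>UNIV. v $ k *\<^sub>R axis k 1))"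
    using basis_expansion[of v] by (simp add: scalar_mult_eq_scaleR)
  also have "\<dots> = (\<Sum>k\<in>UNIV. v $ k *\<^sub>R L (0, axis k 1))"
    by (simp only: linear_sum[OF lin] linear_scale[OF lin])
  finally show ?thesis .
qed

lemma lin_pair_split:
  assumes "linear L"
  shows "L e = L (fst e, 0) + L (0, snd e)"
proof -
  have "e = (fst e, 0) + (0, snd e)" by simp
  then show ?thesis using linear_add[OF assms, of "(fst e, 0)" "(0, snd e)"] by metis
qed

locale hs =
  fixes g :: "(real^'n) \<times> (real^'p) \<Rightarrow> real" and \<mu> Qg :: real
    and D :: "(real^'n) \<times> (real^'p) \<Rightarrow> ((real^'n) \<times> (real^'p)) \<Rightarrow>\<^sub>L (real^'p^'p)"
  assumes mu_pos: "\<mu> > 0"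
    and g_diff: "\<forall>z. g differentiable (at z)"
    and g_diff2: "\<forall>z. (\<lambda>w. (grad_x g w, grad_y g w)) differentiable (at z)"
    and hess_pd: "\<forall>z v. \<mu> * (norm v)\<^sup>2 \<le> v \<bullet> (hess_yy g z *v v)"
    and hyy_lip: "\<forall>z w. dist (hess_yy g z) (hess_yy g w) \<le> Qg * dist z w"
    and hxy_lip: "\<forall>z w. dist (hess_xy g z) (hess_xy g w) \<le> Qg * dist z w"
    and D_der: "\<forall>z. (hess_yy g has_derivative blinfun_apply (D z)) (at z)"
    and D_cont: "continuous_on UNIV D"
begin

abbreviation "G \<equiv> grad_y g"
abbreviation "H \<equiv> hess_yy g"
abbreviation "X \<equiv> hess_xy g"
abbreviation "Hi w \<equiv> matrix_inv (hess_yy g w)"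

definition DGc :: "(real^'n) \<times> (real^'p) \<Rightarrow> 'p \<Rightarrow> (real^'n) \<times> (real^'p) \<Rightarrow> real" where
  "DGc w j = frechet_derivative (\<lambda>w. G w $ j) (at w)"

definition Dg :: "(real^'n) \<times> (real^'p) \<Rightarrow> (real^'n) \<times> (real^'p) \<Rightarrow> real" where
  "Dg w = frechet_derivative g (at w)"

lemma Dg_has: "(g has_derivative Dg w) (at w)"
  using g_diff frechet_derivative_works unfolding Dg_def by blast

lemma Dg_G: "Dg w (0, axis j 1) = G w $ j"
  by (simp add: Dg_def grad_y_def)

lemma G_diff: "(\<lambda>w. G w $ j) differentiable (at z)"
proof -
  obtain F' where F': "((\<lambda>w. (grad_x g w, grad_y g w)) has_derivative F') (at z)"
    using g_diff2 unfolding differentiable_def by blast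
  have "((\<lambda>w. snd (grad_x g w, grad_y g w) $ j) has_derivative (\<lambda>h. snd (F' h) $ j)) (at z)"
    by (intro bounded_linear.has_derivative[OF bounded_linear_vec_nth] has_derivative_snd F')
  then show ?thesis unfolding differentiable_def by auto
qed

lemma DGc_has: "((\<lambda>w. G w $ j) has_derivative DGc w j) (at w)"
  using G_diff frechet_derivative_works unfolding DGc_def by blast

lemma DGc_lin: "linear (DGc w j)"
  using DGc_has has_derivative_linear by blast

lemma DGc_H: "DGc w j (0, axis i 1) = H w $ i $ j"
  by (simp add: DGc_def hess_yy_def)

lemma DGc_X: "DGc w j (axis i 1, 0) = X w $ i $ j"
  by (simp add: DGc_def hess_xy_def)

lemma DGc_formula: "DGc w j e = (fst e v* X w) $ j + (snd e v* H w) $ j"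
proof -
  have 1: "DGc w j e = DGc w j (fst e, 0) + DGc w j (0, snd e)"
    by (rule lin_pair_split[OF DGc_lin])
  have 2: "DGc w j (fst e, 0) = (\<Sum>k\<in>UNIV. fst e $ k * X w $ k $ j)"
    using lin_fst_expand[OF DGc_lin, of w j "fst e"] by (simp add: DGc_X)
  have 3: "DGc w j (0, snd e) = (\<Sum>k\<in>UNIV. snd e $ k * H w $ k $ j)"
    using lin_snd_expand[OF DGc_lin, of w j "snd e"] by (simp add: DGc_H)
  show ?thesis unfolding 1 2 3 by (simp add: vector_matrix_mult_def)
qed

definition DG :: "(real^'n) \<times> (real^'p) \<Rightarrow> (real^'n) \<times> (real^'p) \<Rightarrow> real^'p" where
  "DG w e = fst e v* X w + snd e v* H w"

lemma G_has: "(G has_derivative DG w) (at w)"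
proof (rule has_derivative_vecI)
  fix j
  have "(\<lambda>e. DG w e $ j) = DGc w j" by (rule ext) (simp add: DG_def DGc_formula)
  then show "((\<lambda>w. G w $ j) has_derivative (\<lambda>e. DG w e $ j)) (at w)" using DGc_has by simp
qed

lemma H_cont: "isCont H z"
  by (rule lip_isCont[of _ _ Qg]) (use hyy_lip in blast)

lemma X_cont: "isCont X z"
  by (rule lip_isCont[of _ _ Qg]) (use hxy_lip in blast)

lemma G_cont: "isCont G z"
  using has_derivative_continuous[OF G_has] by simp

lemma D_isCont: "isCont D z"
  using D_cont continuous_on_eq_continuous_at[OF open_UNIV] by blast

lemma H_ent_has: "((\<lambda>w. H w $ i $ j) has_derivative (\<lambda>e. D w e $ i $ j)) (at w)"
proof -
  have 1: "((\<lambda>w. H w $ i) has_derivative (\<lambda>e. D w e $ i)) (at w)"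
    using bounded_linear.has_derivative[OF bounded_linear_vec_nth D_der[rule_format, of w], of i] .
  show ?thesis
    using bounded_linear.has_derivative[OF bounded_linear_vec_nth 1, of j] .
qed

lemma H_sym: "H w $ i $ j = H w $ j $ i"
proof -
  have p: "((\<lambda>t. (Dg (w + t *\<^sub>R (0, axis j 1)) (0, axis i 1) - Dg w (0, axis i 1)) / t) \<longlongrightarrow> DGc w j (0, axis i 1)) (at 0)"
  proof (rule peano[where \<phi>=g])
    show "(g has_derivative Dg u) (at u)" for u by (rule Dg_has)
    show "((\<lambda>u. Dg u (0, axis j 1)) has_derivative DGc u j) (at u)" for u
      unfolding Dg_G by (rule DGc_has)
    have "(\<lambda>u. DGc u j (0, axis i 1)) = (\<lambda>u. H u $ i $ j)" by (simp add: DGc_H)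
    then show "isCont (\<lambda>u. DGc u j (0, axis i 1)) w"
      using H_cont by simp
  qed
  have q: "((\<lambda>t. (G (w + t *\<^sub>R (0, axis j 1)) $ i - G w $ i) / t) \<longlongrightarrow> DGc w i (0, axis j 1)) (at 0)"
    by (rule dirquot[OF DGc_has])
  from p have "((\<lambda>t. (G (w + t *\<^sub>R (0, axis j 1)) $ i - G w $ i) / t) \<longlongrightarrow> H w $ i $ j) (at 0)"
    by (simp add: Dg_G DGc_H)
  then have "H w $ i $ j = DGc w i (0, axis j 1)" using q by (rule tendsto_unique[OF at_neq_bot])
  then show ?thesis by (simp add: DGc_H)
qed


lemma H_inj: "inj ((*v) (H w))"
proof (rule injI)
  fix a b assume ab: "H w *v a = H w *v b"
  have "H w *v (a - b) = 0" using ab by (simp add: matrix_vector_mult_diff_distrib)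
  then have "\<mu> * (norm (a - b))\<^sup>2 \<le> 0" using hess_pd by (metis inner_zero_right)
  then show "a = b" using mu_pos by (simp add: mult_le_0_iff)
qed

lemma H_invertible: "invertible (H w)"
  using H_inj matrix_left_invertible_injective invertible_left_inverse by blast

lemma Hi_props: "H w ** Hi w = mat 1 \<and> Hi w ** H w = mat 1"
proof -
  have "\<exists>A'. H w ** A' = mat 1 \<and> A' ** H w = mat 1" using H_invertible unfolding invertible_def .
  then show ?thesis unfolding matrix_inv_def by (rule someI_ex)
qed

lemma Hi_r: "H w ** Hi w = mat 1" using Hi_props by blast
lemma Hi_l: "Hi w ** H w = mat 1" using Hi_props by blast

lemma H_transpose: "transpose (H w) = H w"
  by (simp add: transpose_def vec_eq_iff H_sym)

lemma Hi_transpose: "transpose (Hi w) = Hi w"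
proof -
  have "transpose (H w ** Hi w) = transpose (Hi w) ** transpose (H w)" by (rule matrix_transpose_mul)
  then have "transpose (Hi w) ** H w = mat 1" by (simp add: Hi_r H_transpose)
  then have "transpose (Hi w) = transpose (Hi w) ** (H w ** Hi w)" by (simp add: Hi_r)
  also have "\<dots> = Hi w" using \<open>transpose (Hi w) ** H w = mat 1\<close> by (simp add: matrix_mul_assoc)
  finally show ?thesis .
qed

lemma Hi_sym: "Hi w $ i $ j = Hi w $ j $ i"
proof -
  have "transpose (Hi w) $ i $ j = Hi w $ j $ i" by (simp add: transpose_def)
  then show ?thesis using Hi_transpose[of w] by simp
qed

lemma H_Hi_v: "H w *v (Hi w *v v) = v"
  by (simp add: matrix_vector_mul_assoc Hi_r)

lemma Hi_H_v: "Hi w *v (H w *v v) = v"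
  by (simp add: matrix_vector_mul_assoc Hi_l)

lemma Hi_bound: "norm (Hi w *v v) \<le> norm v / \<mu>"
proof -
  define u where "u = Hi w *v v"
  have "\<mu> * (norm u)\<^sup>2 \<le> u \<bullet> (H w *v u)" using hess_pd by blast
  also have "H w *v u = v" unfolding u_def by (rule H_Hi_v)
  also have "u \<bullet> v \<le> norm u * norm v" by (rule norm_cauchy_schwarz)
  finally have A: "\<mu> * (norm u * norm u) \<le> norm u * norm v" by (simp add: power2_eq_square)
  have "\<mu> * norm u \<le> norm v"
  proof (cases "norm u = 0")
    case True then show ?thesis by simp
  next
    case False
    then have "norm u > 0" by simp
    moreover have "(\<mu> * norm u) * norm u \<le> norm v * norm u" using A by (simp add: ac_simps)
    ultimately show ?thesis by (rule mult_right_le_imp_le[rotated])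
  qed
  then show ?thesis unfolding u_def using mu_pos by (simp add: field_simps)
qed

lemma mv_axis: "(A *v axis k 1) $ i = A $ i $ k"
  by (simp add: matrix_vector_mult_def axis_def if_distrib cong: if_cong)

lemma Hi_cont: "isCont Hi z"
  unfolding isCont_def
proof (rule vec_tendstoI, rule vec_tendstoI)
  fix i k
  define u where "u = Hi z *v axis k 1"
  have id: "Hi w $ i $ k - Hi z $ i $ k = (Hi w *v ((H z - H w) *v u)) $ i" for w
  proof -
    have "Hi w *v ((H z - H w) *v u) = Hi w *v (H z *v u) - Hi w *v (H w *v u)"
      by (simp add: matrix_vector_mult_diff_rdistrib matrix_vector_mult_diff_distrib)
    also have "\<dots> = Hi w *v axis k 1 - Hi z *v axis k 1" unfolding u_def by (simp add: H_Hi_v Hi_H_v)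
    finally show ?thesis by (simp add: mv_axis)
  qed
  have "((\<lambda>w. Hi w $ i $ k - Hi z $ i $ k) \<longlongrightarrow> 0) (at z)"
  proof (rule Lim_null_comparison)
    show "eventually (\<lambda>w. norm (Hi w $ i $ k - Hi z $ i $ k) \<le> norm ((H z - H w) *v u) / \<mu>) (at z)"
    proof (rule always_eventually, rule allI)
      fix w
      have "norm (Hi w $ i $ k - Hi z $ i $ k) \<le> norm (Hi w *v ((H z - H w) *v u))"
        unfolding id using component_le_norm_cart by simp
      also have "\<dots> \<le> norm ((H z - H w) *v u) / \<mu>" by (rule Hi_bound)
      finally show "norm (Hi w $ i $ k - Hi z $ i $ k) \<le> norm ((H z - H w) *v u) / \<mu>" .
    qed
    have "((\<lambda>w. (H z - H w) *v u) \<longlongrightarrow> (H z - H z) *v u) (at z)"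
      by (intro tendsto_mv tendsto_intros H_cont[unfolded isCont_def])
    then have "((\<lambda>w. norm ((H z - H w) *v u)) \<longlongrightarrow> 0) (at z)"
      using tendsto_norm by fastforce
    then show "((\<lambda>w. norm ((H z - H w) *v u) / \<mu>) \<longlongrightarrow> 0) (at z)"
      by (rule tendsto_divide_zero)
  qed
  then show "((\<lambda>w. Hi w $ i $ k) \<longlongrightarrow> Hi z $ i $ k) (at z)" using Lim_null by blast
qed

lemma Dapp_cont: "isCont (\<lambda>w. blinfun_apply (D w) a) z"
  unfolding isCont_def
  by (rule blinfun.tendsto[OF D_isCont[unfolded isCont_def] tendsto_const])

lemma D_sym: "D w e $ i $ j = D w e $ j $ i"
proof -
  have 1: "((\<lambda>s. (H (w + s *\<^sub>R e) $ i $ j - H w $ i $ j) / s) \<longlongrightarrow> D w e $ i $ j) (at 0)"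
    by (rule dirquot[OF H_ent_has])
  have 2: "((\<lambda>s. (H (w + s *\<^sub>R e) $ j $ i - H w $ j $ i) / s) \<longlongrightarrow> D w e $ j $ i) (at 0)"
    by (rule dirquot[OF H_ent_has])
  have 3: "((\<lambda>s. (H (w + s *\<^sub>R e) $ i $ j - H w $ i $ j) / s) \<longlongrightarrow> D w e $ j $ i) (at 0)"
    using 2 by (simp add: H_sym[of _ j i])
  show ?thesis using tendsto_unique[OF at_neq_bot 1 3] .
qed

lemma D_third: "D z (0, axis l 1) $ j $ i = D z (0, axis j 1) $ l $ i"
proof -
  have p: "((\<lambda>t. (DGc (z + t *\<^sub>R (0, axis j 1)) i (0, axis l 1) - DGc z i (0, axis l 1)) / t)
      \<longlongrightarrow> D z (0, axis l 1) $ j $ i) (at 0)"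
  proof (rule peano[where \<phi>="\<lambda>w. G w $ i" and Db="\<lambda>w e. D w e $ j $ i"])
    show "((\<lambda>w. G w $ i) has_derivative DGc u i) (at u)" for u by (rule DGc_has)
    show "((\<lambda>u. DGc u i (0, axis j 1)) has_derivative (\<lambda>e. D u e $ j $ i)) (at u)" for u
      unfolding DGc_H by (rule H_ent_has)
    show "isCont (\<lambda>w. D w (0, axis l 1) $ j $ i) z"
      by (intro isCont_vec_nth Dapp_cont)
  qed
  then have p': "((\<lambda>t. (H (z + t *\<^sub>R (0, axis j 1)) $ l $ i - H z $ l $ i) / t) \<longlongrightarrow> D z (0, axis l 1) $ j $ i) (at 0)"
    by (simp add: DGc_H)
  have q: "((\<lambda>t. (H (z + t *\<^sub>R (0, axis j 1)) $ l $ i - H z $ l $ i) / t) \<longlongrightarrow> D z (0, axis j 1) $ l $ i) (at 0)"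
    by (rule dirquot[OF H_ent_has])
  show ?thesis using tendsto_unique[OF at_neq_bot p' q] .
qed

lemma shift_pair: "(z::(real^'n) \<times> (real^'p)) + (0, v) = (fst z, snd z + v)"
  by (cases z) simp

lemma ddir_H: "ddir_y H z W = D z (0, W)"
  unfolding ddir_y_def
proof (rule tendsto_Lim[OF at_neq_bot])
  show "((\<lambda>t. (1 / t) *\<^sub>R (H (fst z, snd z + t *\<^sub>R W) - H z)) \<longlongrightarrow> D z (0, W)) (at 0)"
    using dirquot_vec[OF D_der[rule_format, of z], of "(0, W)"] by (simp add: shift_pair)
qed

lemma DGc_snd: "DGc w i (0, W) = (\<Sum>j\<in>UNIV. W $ j * H w $ j $ i)"
  using lin_snd_expand[OF DGc_lin, of w i W] by (simp add: DGc_H)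

lemma ddir_X: "ddir_y X z W = (\<chi> k i. \<Sum>j\<in>UNIV. W $ j * D z (axis k 1, 0) $ j $ i)"
  unfolding ddir_y_def
proof (rule tendsto_Lim[OF at_neq_bot], rule vec_tendstoI, rule vec_tendstoI)
  fix k i
  have p: "((\<lambda>t. (DGc (z + t *\<^sub>R (0, W)) i (axis k 1, 0) - DGc z i (axis k 1, 0)) / t)
      \<longlongrightarrow> (\<Sum>j\<in>UNIV. W $ j * D z (axis k 1, 0) $ j $ i)) (at 0)"
  proof (rule peano[where \<phi>="\<lambda>w. G w $ i" and Db="\<lambda>w e. \<Sum>j\<in>UNIV. W $ j * D w e $ j $ i"])
    show "((\<lambda>w. G w $ i) has_derivative DGc u i) (at u)" for u by (rule DGc_has)
    show "((\<lambda>u. DGc u i (0, W)) has_derivative (\<lambda>e. \<Sum>j\<in>UNIV. W $ j * D u e $ j $ i)) (at u)" for u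
      unfolding DGc_snd by (intro has_derivative_sum has_derivative_mult_right H_ent_has)
    show "isCont (\<lambda>w. \<Sum>j\<in>UNIV. W $ j * D w (axis k 1, 0) $ j $ i) z"
      by (intro continuous_intros isCont_vec_nth Dapp_cont)
  qed
  then show "((\<lambda>t. ((1 / t) *\<^sub>R (X (fst z, snd z + t *\<^sub>R W) - X z)) $ k $ i)
      \<longlongrightarrow> (\<chi> k i. \<Sum>j\<in>UNIV. W $ j * D z (axis k 1, 0) $ j $ i) $ k $ i) (at 0)"
    by (simp add: DGc_X shift_pair)
qed


lemma G_strict: "((\<lambda>y. (1 / snd y) *\<^sub>R (G (fst y + snd y *\<^sub>R d) - G (fst y))) \<longlongrightarrow> DG z d) (PF z)"
proof (rule strict_dir[OF G_has])
  show "isCont (\<lambda>w. DG w d) z" unfolding isCont_def DG_def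
    by (intro tendsto_intros tendsto_vm X_cont[unfolded isCont_def] H_cont[unfolded isCont_def])
qed

lemma H_strict: "((\<lambda>y. (1 / snd y) *\<^sub>R (H (fst y + snd y *\<^sub>R d) - H (fst y))) \<longlongrightarrow> D z d) (PF z)"
  by (rule strict_dir[OF D_der[rule_format] Dapp_cont])

definition LA :: "(real^'n) \<times> (real^'p) \<Rightarrow> (real^'n) \<times> (real^'p) \<Rightarrow> real^'p" where
  "LA z d = snd d - Hi z *v DG z d + Hi z *v (D z d *v (Hi z *v G z))"

lemma A_identity:
  assumes t: "t \<noteq> 0"
  shows "(1 / t) *\<^sub>R (Amap g w' - Amap g w) = (1 / t) *\<^sub>R (snd w' - snd w)
     - Hi w' *v ((1 / t) *\<^sub>R (G w' - G w)) + Hi w' *v (((1 / t) *\<^sub>R (H w' - H w)) *v (Hi w *v G w))"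
proof -
  have key: "Hi w' *v G w' - Hi w *v G w = Hi w' *v (G w' - G w) - Hi w' *v ((H w' - H w) *v (Hi w *v G w))"
  proof -
    have "Hi w' *v ((H w' - H w) *v (Hi w *v G w)) = Hi w' *v (H w' *v (Hi w *v G w)) - Hi w' *v (H w *v (Hi w *v G w))"
      by (simp add: matrix_vector_mult_diff_rdistrib matrix_vector_mult_diff_distrib)
    also have "\<dots> = Hi w *v G w - Hi w' *v G w" by (simp add: Hi_H_v H_Hi_v)
    finally show ?thesis by (simp add: matrix_vector_mult_diff_distrib)
  qed
  have "(1 / t) *\<^sub>R (Amap g w' - Amap g w) = (1 / t) *\<^sub>R (snd w' - snd w) - (1 / t) *\<^sub>R (Hi w' *v G w' - Hi w *v G w)"
    unfolding Amap_def by (simp add: algebra_simps)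
  also have "(1 / t) *\<^sub>R (Hi w' *v G w' - Hi w *v G w) = Hi w' *v ((1 / t) *\<^sub>R (G w' - G w)) - Hi w' *v (((1 / t) *\<^sub>R (H w' - H w)) *v (Hi w *v G w))"
  proof -
    have e1: "(1 / t) *\<^sub>R (Hi w' *v (G w' - G w)) = Hi w' *v ((1 / t) *\<^sub>R (G w' - G w))"
      by (simp only: matrix_vector_mult_scaleR)
    have e2a: "(1 / t) *\<^sub>R (Hi w' *v ((H w' - H w) *v (Hi w *v G w))) = Hi w' *v ((1 / t) *\<^sub>R ((H w' - H w) *v (Hi w *v G w)))"
      by (rule matrix_vector_mult_scaleR[symmetric])
    have e2b: "(1 / t) *\<^sub>R ((H w' - H w) *v (Hi w *v G w)) = ((1 / t) *\<^sub>R (H w' - H w)) *v (Hi w *v G w)"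
      by (rule scaleR_matrix_vector_assoc)
    have e2: "(1 / t) *\<^sub>R (Hi w' *v ((H w' - H w) *v (Hi w *v G w))) = Hi w' *v (((1 / t) *\<^sub>R (H w' - H w)) *v (Hi w *v G w))"
      unfolding e2a e2b ..
    show ?thesis unfolding key scaleR_diff_right e1 e2 ..
  qed
  finally show ?thesis by (simp add: algebra_simps)
qed

lemma A_strict: "((\<lambda>y. (1 / snd y) *\<^sub>R (Amap g (fst y + snd y *\<^sub>R d) - Amap g (fst y))) \<longlongrightarrow> LA z d) (PF z)"
proof -
  have Hs: "((\<lambda>y. Hi (fst y + snd y *\<^sub>R d)) \<longlongrightarrow> Hi z) (PF z)"
    by (rule isCont_tendsto_compose[OF Hi_cont PF_shift_tendsto])
  have Hf: "((\<lambda>y. Hi (fst y)) \<longlongrightarrow> Hi z) (PF z)"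
    by (rule isCont_tendsto_compose[OF Hi_cont PF_fst])
  have Gf: "((\<lambda>y. G (fst y)) \<longlongrightarrow> G z) (PF z)"
    by (rule isCont_tendsto_compose[OF G_cont PF_fst])
  have lim: "((\<lambda>y. snd d - Hi (fst y + snd y *\<^sub>R d) *v ((1 / snd y) *\<^sub>R (G (fst y + snd y *\<^sub>R d) - G (fst y)))
       + Hi (fst y + snd y *\<^sub>R d) *v (((1 / snd y) *\<^sub>R (H (fst y + snd y *\<^sub>R d) - H (fst y))) *v (Hi (fst y) *v G (fst y))))
       \<longlongrightarrow> LA z d) (PF z)"
    unfolding LA_def
    by (intro tendsto_add tendsto_diff tendsto_const tendsto_mv Hs Hf Gf G_strict H_strict)
  show ?thesis
  proof (rule Lim_transform_eventually[OF lim])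
    show "eventually (\<lambda>y. snd d - Hi (fst y + snd y *\<^sub>R d) *v ((1 / snd y) *\<^sub>R (G (fst y + snd y *\<^sub>R d) - G (fst y)))
       + Hi (fst y + snd y *\<^sub>R d) *v (((1 / snd y) *\<^sub>R (H (fst y + snd y *\<^sub>R d) - H (fst y))) *v (Hi (fst y) *v G (fst y)))
       = (1 / snd y) *\<^sub>R (Amap g (fst y + snd y *\<^sub>R d) - Amap g (fst y))) (PF z)"
      using PF_snd_pos
    proof (rule eventually_mono)
      fix y :: "((real^'n) \<times> (real^'p)) \<times> real" assume "snd y > 0"
      then have t: "snd y \<noteq> 0" by simp
      have "(1 / snd y) *\<^sub>R (snd (fst y + snd y *\<^sub>R d) - snd (fst y)) = snd d" using t by simp
      then show "snd d - Hi (fst y + snd y *\<^sub>R d) *v ((1 / snd y) *\<^sub>R (G (fst y + snd y *\<^sub>R d) - G (fst y)))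
       + Hi (fst y + snd y *\<^sub>R d) *v (((1 / snd y) *\<^sub>R (H (fst y + snd y *\<^sub>R d) - H (fst y))) *v (Hi (fst y) *v G (fst y)))
       = (1 / snd y) *\<^sub>R (Amap g (fst y + snd y *\<^sub>R d) - Amap g (fst y))"
        using A_identity[OF t, of "fst y + snd y *\<^sub>R d" "fst y"] by simp
    qed
  qed
qed

lemma Phi_strict:
  "((\<lambda>y. (1 / snd y) *\<^sub>R ((fst (fst y + snd y *\<^sub>R d), Amap g (fst y + snd y *\<^sub>R d)) - (fst (fst y), Amap g (fst y))))
     \<longlongrightarrow> (fst d, LA z d)) (PF z)"
proof -
  have lim: "((\<lambda>y. (fst d, (1 / snd y) *\<^sub>R (Amap g (fst y + snd y *\<^sub>R d) - Amap g (fst y)))) \<longlongrightarrow> (fst d, LA z d)) (PF z)"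
    by (intro tendsto_Pair tendsto_const A_strict)
  show ?thesis
  proof (rule Lim_transform_eventually[OF lim])
    show "eventually (\<lambda>y. (fst d, (1 / snd y) *\<^sub>R (Amap g (fst y + snd y *\<^sub>R d) - Amap g (fst y)))
       = (1 / snd y) *\<^sub>R ((fst (fst y + snd y *\<^sub>R d), Amap g (fst y + snd y *\<^sub>R d)) - (fst (fst y), Amap g (fst y)))) (PF z)"
      using PF_snd_pos by (rule eventually_mono) simp
  qed
qed

lemma Amap_cont: "isCont (Amap g) z"
proof -
  have "((\<lambda>w. snd w - Hi w *v G w) \<longlongrightarrow> snd z - Hi z *v G z) (at z)"
    by (intro tendsto_diff tendsto_snd tendsto_ident_at tendsto_mv Hi_cont[unfolded isCont_def] G_cont[unfolded isCont_def])
  then show ?thesis unfolding isCont_def Amap_def .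
qed

lemma Phi_cont: "isCont (\<lambda>w. (fst w, Amap g w)) z"
  unfolding isCont_def by (intro tendsto_Pair tendsto_fst tendsto_ident_at Amap_cont[unfolded isCont_def])

lemma s_strict:
  "((\<lambda>y. (\<beta> / 2 * (norm (G (fst y + snd y *\<^sub>R d)))\<^sup>2 - \<beta> / 2 * (norm (G (fst y)))\<^sup>2) / snd y)
     \<longlongrightarrow> \<beta> * (G z \<bullet> DG z d)) (PF z)"
proof -
  have Gs: "((\<lambda>y. G (fst y + snd y *\<^sub>R d)) \<longlongrightarrow> G z) (PF z)"
    by (rule isCont_tendsto_compose[OF G_cont PF_shift_tendsto])
  have Gf: "((\<lambda>y. G (fst y)) \<longlongrightarrow> G z) (PF z)"
    by (rule isCont_tendsto_compose[OF G_cont PF_fst])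
  have lim: "((\<lambda>y. \<beta> / 2 * ((G (fst y + snd y *\<^sub>R d) + G (fst y)) \<bullet> ((1 / snd y) *\<^sub>R (G (fst y + snd y *\<^sub>R d) - G (fst y)))))
      \<longlongrightarrow> \<beta> / 2 * ((G z + G z) \<bullet> DG z d)) (PF z)"
    by (intro tendsto_mult tendsto_const tendsto_inner tendsto_add Gs Gf G_strict)
  have "(G z + G z) \<bullet> DG z d = G z \<bullet> DG z d + G z \<bullet> DG z d" by (rule inner_add_left)
  then have eq: "\<beta> / 2 * ((G z + G z) \<bullet> DG z d) = \<beta> * (G z \<bullet> DG z d)" by simp
  from lim have lim': "((\<lambda>y. \<beta> / 2 * ((G (fst y + snd y *\<^sub>R d) + G (fst y)) \<bullet> ((1 / snd y) *\<^sub>R (G (fst y + snd y *\<^sub>R d) - G (fst y)))))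
      \<longlongrightarrow> \<beta> * (G z \<bullet> DG z d)) (PF z)" by (simp only: eq)
  show ?thesis
  proof (rule Lim_transform_eventually[OF lim'])
    show "eventually (\<lambda>y. \<beta> / 2 * ((G (fst y + snd y *\<^sub>R d) + G (fst y)) \<bullet> ((1 / snd y) *\<^sub>R (G (fst y + snd y *\<^sub>R d) - G (fst y))))
      = (\<beta> / 2 * (norm (G (fst y + snd y *\<^sub>R d)))\<^sup>2 - \<beta> / 2 * (norm (G (fst y)))\<^sup>2) / snd y) (PF z)"
      using PF_snd_pos
    proof (rule eventually_mono)
      fix y :: "((real^'n) \<times> (real^'p)) \<times> real" assume "snd y > 0"
      define a where "a = G (fst y + snd y *\<^sub>R d)"
      define b where "b = G (fst y)"
      have key: "(a + b) \<bullet> (a - b) = (norm a)\<^sup>2 - (norm b)\<^sup>2"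
        by (simp add: inner_add_left inner_diff_right power2_norm_eq_inner inner_commute[of b a])
      have "(a + b) \<bullet> ((1 / snd y) *\<^sub>R (a - b)) = ((norm a)\<^sup>2 - (norm b)\<^sup>2) / snd y"
        by (simp only: inner_scaleR_right key) simp
      then have "\<beta> / 2 * ((a + b) \<bullet> ((1 / snd y) *\<^sub>R (a - b))) = (\<beta> / 2 * (norm a)\<^sup>2 - \<beta> / 2 * (norm b)\<^sup>2) / snd y"
        by (simp add: right_diff_distrib diff_divide_distrib)
      then show "\<beta> / 2 * ((G (fst y + snd y *\<^sub>R d) + G (fst y)) \<bullet> ((1 / snd y) *\<^sub>R (G (fst y + snd y *\<^sub>R d) - G (fst y))))
        = (\<beta> / 2 * (norm (G (fst y + snd y *\<^sub>R d)))\<^sup>2 - \<beta> / 2 * (norm (G (fst y)))\<^sup>2) / snd y"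
        unfolding a_def[symmetric] b_def[symmetric] .
    qed
  qed
qed


end

context hs begin

lemma D_lin: "linear (blinfun_apply (D w))"
  by (rule bounded_linear.linear[OF blinfun.bounded_linear_right])

lemma D_fst_ent: "D z (d1, 0) $ i $ j = (\<Sum>k\<in>UNIV. d1 $ k * D z (axis k 1, 0) $ i $ j)"
  using lin_fst_expand[OF D_lin, of z d1] by (simp add: sum_component)

lemma D_snd_ent: "D z (0, d2) $ i $ j = (\<Sum>k\<in>UNIV. d2 $ k * D z (0, axis k 1) $ i $ j)"
  using lin_snd_expand[OF D_lin, of z d2] by (simp add: sum_component)

lemma inner_vec_sum: "(x::real^'m) \<bullet> y = (\<Sum>i\<in>UNIV. x $ i * y $ i)"
  by (simp add: inner_vec_def)

end

context hs begin
lemma KEY1: "u \<bullet> (D z (d1, 0) *v W) = (ddir_y X z W *v u) \<bullet> d1"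
proof -
  define T where "T k = D z (axis k 1, 0)" for k
  have ent: "D z (d1, 0) $ i $ j = (\<Sum>k\<in>UNIV. d1 $ k * T k $ i $ j)" for i j
    unfolding T_def by (rule D_fst_ent)
  have dd: "ddir_y X z W $ k $ i = (\<Sum>j\<in>UNIV. W $ j * T k $ i $ j)" for k i
    unfolding ddir_X T_def by (simp add: D_sym[of z "(axis k 1, 0)" _ i])
  define F where "F i j k = u $ i * W $ j * d1 $ k * T k $ i $ j" for i j k
  have L: "u \<bullet> (D z (d1, 0) *v W) = (\<Sum>i\<in>UNIV. \<Sum>j\<in>UNIV. \<Sum>k\<in>UNIV. F i j k)"
    unfolding inner_vec_sum matrix_vector_mult_def F_def vec_lambda_beta ent
    by (simp add: sum_distrib_left sum_distrib_right mult_ac)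
  have "(ddir_y X z W *v u) \<bullet> d1 = (\<Sum>k\<in>UNIV. \<Sum>i\<in>UNIV. \<Sum>j\<in>UNIV. F i j k)"
    unfolding inner_vec_sum matrix_vector_mult_def F_def vec_lambda_beta dd
    by (simp add: sum_distrib_left sum_distrib_right mult_ac)
  also have "\<dots> = (\<Sum>i\<in>UNIV. \<Sum>k\<in>UNIV. \<Sum>j\<in>UNIV. F i j k)" by (rule sum.swap)
  also have "\<dots> = (\<Sum>i\<in>UNIV. \<Sum>j\<in>UNIV. \<Sum>k\<in>UNIV. F i j k)" by (rule sum.cong[OF refl], rule sum.swap)
  finally show ?thesis using L by simp
qed

lemma KEY2: "u \<bullet> (D z (0, d2) *v W) = (ddir_y H z W *v u) \<bullet> d2"
proof -
  define T where "T k = D z (0, axis k 1)" for k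
  have ent: "D z (0, d2) $ i $ j = (\<Sum>k\<in>UNIV. d2 $ k * T k $ i $ j)" for i j
    unfolding T_def by (rule D_snd_ent)
  have sw: "T j $ l $ i = T l $ i $ j" for i j l
    unfolding T_def using D_third[of z j l i] D_sym[of z "(0, axis l 1)" j i] by simp
  have dd: "ddir_y H z W $ l $ i = (\<Sum>j\<in>UNIV. W $ j * T l $ i $ j)" for l i
    unfolding ddir_H T_def using D_snd_ent[of z W l i] sw[unfolded T_def] by simp
  define F where "F i j l = u $ i * W $ j * d2 $ l * T l $ i $ j" for i j l
  have L: "u \<bullet> (D z (0, d2) *v W) = (\<Sum>i\<in>UNIV. \<Sum>j\<in>UNIV. \<Sum>l\<in>UNIV. F i j l)"
    unfolding inner_vec_sum matrix_vector_mult_def F_def vec_lambda_beta ent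
    by (simp add: sum_distrib_left sum_distrib_right mult_ac)
  have "(ddir_y H z W *v u) \<bullet> d2 = (\<Sum>l\<in>UNIV. \<Sum>i\<in>UNIV. \<Sum>j\<in>UNIV. F i j l)"
    unfolding inner_vec_sum matrix_vector_mult_def F_def vec_lambda_beta dd
    by (simp add: sum_distrib_left sum_distrib_right mult_ac)
  also have "\<dots> = (\<Sum>i\<in>UNIV. \<Sum>l\<in>UNIV. \<Sum>j\<in>UNIV. F i j l)" by (rule sum.swap)
  also have "\<dots> = (\<Sum>i\<in>UNIV. \<Sum>j\<in>UNIV. \<Sum>l\<in>UNIV. F i j l)" by (rule sum.cong[OF refl], rule sum.swap)
  finally show ?thesis using L by simp
qed
end

lemma neg_mv: "(- A) *v (x::real^'n) = - (A *v x)"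
  by (simp add: matrix_vector_mult_def vec_eq_iff sum_negf)

context hs begin

lemma c_identity: "\<beta> * (G z \<bullet> DG z (d1, d2)) = (\<beta> *\<^sub>R (X z *v G z), \<beta> *\<^sub>R (H z *v G z)) \<bullet> (d1, d2)"
proof -
  have 1: "G z \<bullet> (d1 v* X z) = (X z *v G z) \<bullet> d1"
    using dot_lmul_matrix[of d1 "X z" "G z"] by (simp add: inner_commute)
  have 2: "G z \<bullet> (d2 v* H z) = (H z *v G z) \<bullet> d2"
    using dot_lmul_matrix[of d2 "H z" "G z"] by (simp add: inner_commute)
  show ?thesis unfolding DG_def by (simp add: inner_add_right 1 2 algebra_simps)
qed

lemma adjoint: "(a1 + JAx g z *v a2, JAy g z *v a2) \<bullet> (d1, d2) = (a1, a2) \<bullet> (d1, LA z (d1, d2))"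
proof -
  define W where "W = Hi z *v G z"
  define u where "u = Hi z *v a2"
  have JAx_u: "JAx g z *v a2 = - (X z *v u) + ddir_y X z W *v u"
    unfolding JAx_def W_def u_def
    by (simp add: matrix_vector_mult_add_rdistrib matrix_vector_mult_diff_rdistrib neg_mv matrix_vector_mul_assoc)
  have JAy_u: "JAy g z *v a2 = ddir_y H z W *v u"
    unfolding JAy_def W_def u_def by (simp add: matrix_vector_mul_assoc)
  have Hd2: "Hi z *v (d2 v* H z) = d2"
    using transpose_matrix_vector[of "H z" d2] H_transpose[of z] Hi_H_v[of z d2] by simp
  have LA_eq: "LA z (d1, d2) = - (Hi z *v (d1 v* X z)) + Hi z *v (D z (d1, d2) *v W)"
    unfolding LA_def DG_def W_def by (simp add: matrix_vector_right_distrib Hd2)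
  have sym_in: "a2 \<bullet> (Hi z *v v) = u \<bullet> v" for v
  proof -
    have "a2 \<bullet> (Hi z *v v) = (a2 v* Hi z) \<bullet> v" by (rule dot_lmul_matrix[symmetric])
    also have "a2 v* Hi z = u" unfolding u_def
      using transpose_matrix_vector[of "Hi z" a2] Hi_transpose[of z] by simp
    finally show ?thesis .
  qed
  have Dsplit: "D z (d1, d2) = D z (d1, 0) + D z (0, d2)"
    using lin_pair_split[OF D_lin, of z "(d1, d2)"] by simp
  have "(a1, a2) \<bullet> (d1, LA z (d1, d2)) = a1 \<bullet> d1 - u \<bullet> (d1 v* X z) + u \<bullet> (D z (d1, 0) *v W) + u \<bullet> (D z (0, d2) *v W)"
    unfolding LA_eq Dsplit by (simp add: inner_add_right inner_diff_right sym_in matrix_vector_mult_add_rdistrib matrix_vector_right_distrib inner_minus_right)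
  also have "u \<bullet> (d1 v* X z) = (X z *v u) \<bullet> d1"
    using dot_lmul_matrix[of d1 "X z" u] by (simp add: inner_commute)
  also note KEY1
  also note KEY2
  finally show ?thesis unfolding JAx_u JAy_u by (simp add: inner_add_left inner_diff_left inner_minus_left)
qed

end

theorem proposition3p1:
  fixes f g :: "(real^'n) \<times> (real^'p) \<Rightarrow> real"
    and Df :: "(real^'n) \<times> (real^'p) \<Rightarrow> ((real^'n) \<times> (real^'p)) set"
    and Mf \<mu> Lg Qg \<beta> :: real
    and x :: "real^'n" and y :: "real^'p"
  assumes Mf_pos: "Mf > 0" and mu_pos: "\<mu> > 0" and Lg_pos: "Lg > 0" and Qg_pos: "Qg > 0"
    and f_lip: "\<forall>z w. \<bar>f z - f w\<bar> \<le> Mf * dist z w"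
    and g_diff: "\<forall>z. g differentiable (at z)"
    and g_diff2: "\<forall>z. (\<lambda>w. (grad_x g w, grad_y g w)) differentiable (at z)"
    and hess_pd: "\<forall>z v. \<mu> * (norm v)\<^sup>2 \<le> v \<bullet> (hess_yy g z *v v)"
    and grad_lip: "\<forall>z w. dist (grad_x g z, grad_y g z) (grad_x g w, grad_y g w) \<le> Lg * dist z w"
    and hyy_lip: "\<forall>z w. dist (hess_yy g z) (hess_yy g w) \<le> Qg * dist z w"
    and hxy_lip: "\<forall>z w. dist (hess_xy g z) (hess_xy g w) \<le> Qg * dist z w"
    and hyy_C1: "\<exists>D :: (real^'n) \<times> (real^'p) \<Rightarrow> ((real^'n) \<times> (real^'p)) \<Rightarrow>\<^sub>L (real^'p^'p).
                   (\<forall>z. (hess_yy g has_derivative blinfun_apply (D z)) (at z)) \<and> continuous_on UNIV D"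
    and f_pot: "potential_of f Df"
    and Df_vals: "\<forall>z. compact (Df z) \<and> convex (Df z) \<and> (\<forall>v\<in>Df z. norm v \<le> Mf)"
    and beta_pos: "\<beta> > 0"
  shows "clarke_subdiff (hfun f g \<beta>) (x, y) \<subseteq>
           {(dx + JAx g (x, y) *v dy + \<beta> *\<^sub>R (hess_xy g (x, y) *v grad_y g (x, y)),
             JAy g (x, y) *v dy + \<beta> *\<^sub>R (hess_yy g (x, y) *v grad_y g (x, y))) | dx dy.
              (dx, dy) \<in> clarke_subdiff f (x, Amap g (x, y))}
         \<and> (clarke_regular f \<longrightarrow>
            clarke_subdiff (hfun f g \<beta>) (x, y) =
           {(dx + JAx g (x, y) *v dy + \<beta> *\<^sub>R (hess_xy g (x, y) *v grad_y g (x, y)),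
             JAy g (x, y) *v dy + \<beta> *\<^sub>R (hess_yy g (x, y) *v grad_y g (x, y))) | dx dy.
              (dx, dy) \<in> clarke_subdiff f (x, Amap g (x, y))})"
proof -
  obtain D where D1: "\<forall>z. (hess_yy g has_derivative blinfun_apply (D z)) (at z)"
    and D2: "continuous_on UNIV D" using hyy_C1 by blast
  interpret hs g \<mu> Qg D
    by unfold_locales (use mu_pos g_diff g_diff2 hess_pd hyy_lip hxy_lip D1 D2 in auto)
  define z where "z = (x, y)"
  define u0 where "u0 = (x, Amap g (x, y))"
  define \<Phi> where "\<Phi> w = (fst w, Amap g w)" for w
  define s where "s w = \<beta> / 2 * (norm (grad_y g w))\<^sup>2" for w
  define c where "c = (\<beta> *\<^sub>R (hess_xy g z *v grad_y g z), \<beta> *\<^sub>R (hess_yy g z *v grad_y g z))"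
  define L where "L d = (fst d, LA z d)" for d
  define Lt where "Lt \<xi> = (fst \<xi> + JAx g z *v snd \<xi>, JAy g z *v snd \<xi>)" for \<xi> :: "(real^'n) \<times> (real^'p)"
  define p where "p = cdr f u0"
  have lipf: "lip f Mf" using f_lip unfolding lip_def by blast
  have Mf0: "Mf \<ge> 0" using Mf_pos by simp
  have h_eq: "hfun f g \<beta> = (\<lambda>w. f (\<Phi> w) + s w)" by (rule ext) (simp add: hfun_def \<Phi>_def s_def)
  have \<Phi>z: "\<Phi> z = u0" by (simp add: \<Phi>_def z_def u0_def)
  have PQ: "((\<lambda>y. (1 / snd y) *\<^sub>R (\<Phi> (fst y + snd y *\<^sub>R d) - \<Phi> (fst y))) \<longlongrightarrow> L d) (PF z)" for d
    unfolding \<Phi>_def L_def by (rule Phi_strict)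
  have sQ: "((\<lambda>y. (s (fst y + snd y *\<^sub>R d) - s (fst y)) / snd y) \<longlongrightarrow> c \<bullet> d) (PF z)" for d
  proof -
    have "\<beta> * (grad_y g z \<bullet> DG z d) = c \<bullet> d"
      using c_identity[of \<beta> z "fst d" "snd d"] unfolding c_def by simp
    then show ?thesis using s_strict[of \<beta> d z] unfolding s_def by simp
  qed
  have cont\<Phi>: "isCont \<Phi> z" unfolding \<Phi>_def by (rule Phi_cont)
  have adj: "Lt \<xi> \<bullet> d = \<xi> \<bullet> L d" for \<xi> d
    using adjoint[of "fst \<xi>" z "snd \<xi>" "fst d" "snd d"] unfolding Lt_def L_def by simp
  have linLt: "linear Lt"
    unfolding Lt_def
    by (rule linearI) (simp_all add: matrix_vector_right_distrib matrix_vector_mult_scaleR algebra_simps)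
  have cdd_eq: "clarke_dd f u0 e = ereal (p e)" for e
    unfolding p_def by (rule cdd_cdr[OF lipf])
  have K_eq: "clarke_subdiff f u0 = {\<xi>. \<forall>d. \<xi> \<bullet> d \<le> p d}"
    by (auto simp: clarke_subdiff_def cdd_eq)
  have sub: "p (a + b) \<le> p a + p b" for a b unfolding p_def by (rule cdr_subadd[OF lipf])
  have hom: "p (r *\<^sub>R a) = r * p a" if "r \<ge> 0" for r a unfolding p_def by (rule cdr_hom[OF lipf that])
  have bnd: "p a \<le> Mf * norm a" for a unfolding p_def by (rule cdr_bound[OF lipf])
  have set_eq: "{(dx + JAx g (x, y) *v dy + \<beta> *\<^sub>R (hess_xy g (x, y) *v grad_y g (x, y)),
             JAy g (x, y) *v dy + \<beta> *\<^sub>R (hess_yy g (x, y) *v grad_y g (x, y))) | dx dy.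
              (dx, dy) \<in> clarke_subdiff f (x, Amap g (x, y))}
        = (\<lambda>\<xi>. Lt \<xi> + c) ` {\<xi>. \<forall>d. \<xi> \<bullet> d \<le> p d}"
    unfolding K_eq[unfolded u0_def, symmetric] Lt_def c_def z_def by force
  have upper: "clarke_dd (hfun f g \<beta>) z d \<le> ereal (p (L d) + c \<bullet> d)" for d
    using CR_upper[OF lipf Mf0 cont\<Phi> PQ sQ] unfolding h_eq[symmetric] \<Phi>z cdd_eq by simp
  have incl: "clarke_subdiff (hfun f g \<beta>) z \<subseteq> (\<lambda>\<xi>. Lt \<xi> + c) ` {\<xi>. \<forall>d. \<xi> \<bullet> d \<le> p d}"
  proof
    fix v assume "v \<in> clarke_subdiff (hfun f g \<beta>) z"
    then have "ereal (v \<bullet> d) \<le> clarke_dd (hfun f g \<beta>) z d" for d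
      unfolding clarke_subdiff_def by blast
    then have vd: "v \<bullet> d \<le> p (L d) + c \<bullet> d" for d
      using upper[of d] order_trans by (metis ereal_less_eq(3))
    show "v \<in> (\<lambda>\<xi>. Lt \<xi> + c) ` {\<xi>. \<forall>d. \<xi> \<bullet> d \<le> p d}"
      by (rule SEP[OF sub hom bnd linLt adj vd]) auto
  qed
  have regpart: "(\<lambda>\<xi>. Lt \<xi> + c) ` {\<xi>. \<forall>d. \<xi> \<bullet> d \<le> p d} \<subseteq> clarke_subdiff (hfun f g \<beta>) z"
    if reg: "clarke_regular f"
  proof
    fix v assume "v \<in> (\<lambda>\<xi>. Lt \<xi> + c) ` {\<xi>. \<forall>d. \<xi> \<bullet> d \<le> p d}"
    then obtain \<xi> where \<xi>: "\<forall>d. \<xi> \<bullet> d \<le> p d" and v: "v = Lt \<xi> + c" by blast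
    have "ereal (v \<bullet> d) \<le> clarke_dd (hfun f g \<beta>) z d" for d
    proof -
      have "v \<bullet> d = \<xi> \<bullet> L d + c \<bullet> d" unfolding v by (simp add: inner_add_left adj)
      also have "\<dots> \<le> p (L d) + c \<bullet> d" using \<xi>[rule_format, of "L d"] by linarith
      finally have 1: "ereal (v \<bullet> d) \<le> ereal (p (L d) + c \<bullet> d)" by simp
      have "clarke_regular_at f (\<Phi> z)" using reg unfolding clarke_regular_def by blast
      from CR_lower[OF lipf Mf0 PQ sQ this]
      have "ereal (p (L d) + c \<bullet> d) \<le> clarke_dd (hfun f g \<beta>) z d"
        unfolding h_eq[symmetric] \<Phi>z cdd_eq by simp
      with 1 show ?thesis by (rule order_trans)
    qed
    then show "v \<in> clarke_subdiff (hfun f g \<beta>) z" unfolding clarke_subdiff_def by blast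
  qed
  show ?thesis
    using incl regpart unfolding set_eq z_def by blast
qed


end
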